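(* Let $\Gamma\in\mathfrak g^*\setminus\{0\}$ with $\mathfrak g=\mathfrak{sl}(2,F)$ and set $r=d(\Gamma)\in\mathbb R\cup\{\infty\}$. Then: (a) every $\mathcal O\in\mathrm{Nil}(\Gamma)$ meets $\Gamma+\mathfrak g^*_{x,r}$ for some $x\in\mathcal B(G)$ with $d_x(\Gamma)<r$; (b) for every $x\in\mathcal B(G)$ with $d_x(\Gamma)<r$, if a nilpotent orbit $\mathcal O$ meets $\Gamma+\mathfrak g^*_{x,r}$ then $\mathcal O\in\mathrm{Nil}(\Gamma)$; (c) for every $x\in\mathcal B(G)$, $\mathrm{Nil}(\Gamma)=\{\mathcal O({}^g\Gamma,x): g\in G,\ d_x({}^g\Gamma)<d(\Gamma)\}=\mathrm{Nil}_x(\Gamma)$.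
   Context: Let $F$ be a nonarchimedean local field of residual characteristic $p\geq3$, $G=\mathrm{SL}(2,F)$, $\mathfrak g=\mathfrak{sl}(2,F)$ identified with $\mathfrak g^*$ via the trace form; $\mathcal B(G)$ is the Bruhat–Tits tree, $\mathfrak g^*_{x,r}$ ($r\in\mathbb R$) the Moy–Prasad lattices and $\mathfrak g^*_{x,r+}=\bigcup_{s>r}\mathfrak g^*_{x,s}$. For nonzero $X\in\mathfrak g^*$, $d_x(X)$ is the unique $t$ with $X\in\mathfrak g^*_{x,t}\setminus\mathfrak g^*_{x,t+}$, $d(X)=\max_xd_x(X)$ ($=\infty$ if $X$ nilpotent). The coset $\Gamma+\mathfrak g^*_{x,d_x(\Gamma)+}$ is degenerate if it contains a nilpotent element (equivalently $d_x(\Gamma)<d(\Gamma)$), and then $\mathcal O(\Gamma,x)$ denotes the unique minimal nilpotent $G$-orbit meeting it. Nilpotent support: $\mathrm{Nil}(\Gamma)=\{\mathcal O(\Gamma,x): x\in\mathcal B(G),\ d_x(\Gamma)<d(\Gamma)\}$; local nilpotent support at $x$: $\mathrm{Nil}_x(\Gamma)=\{\mathcal O({}^g\Gamma,x): g\in G,\ d_x({}^g\Gamma)<d(\Gamma)\}$. *)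

theory Defs
  imports "HOL-Analysis.Analysis"
begin

text \<open>A valuation is a map v :: 'a => int, meaningful on nonzero elements.
  vge v a t means v(a) >= t, with the convention v(0) = +infinity.\<close>

definition vge :: "('a::field \<Rightarrow> int) \<Rightarrow> 'a \<Rightarrow> real \<Rightarrow> bool" where
  "vge v a t \<longleftrightarrow> a = 0 \<or> t \<le> real_of_int (v a)"

text \<open>F is a nonarchimedean local field (complete, discretely valued with normalized
  valuation v, finite residue field) of residual characteristic p.\<close>

definition nonarch_local_field :: "('a::field \<Rightarrow> int) \<Rightarrow> nat \<Rightarrow> bool" where
  "nonarch_local_field v p \<longleftrightarrow>
     (\<forall>x y. x \<noteq> 0 \<longrightarrow> y \<noteq> 0 \<longrightarrow> v (x * y) = v x + v y) \<and>
     (\<forall>x y. x \<noteq> 0 \<longrightarrow> y \<noteq> 0 \<longrightarrow> x + y \<noteq> 0 \<longrightarrow> min (v x) (v y) \<le> v (x + y)) \<and>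
     (\<exists>\<pi>. \<pi> \<noteq> 0 \<and> v \<pi> = 1) \<and>
     (\<forall>f :: nat \<Rightarrow> 'a.
        (\<forall>n::int. \<exists>N. \<forall>m\<ge>N. \<forall>k\<ge>N. vge v (f m - f k) (real_of_int n)) \<longrightarrow>
        (\<exists>L. \<forall>n::int. \<exists>N. \<forall>m\<ge>N. vge v (f m - L) (real_of_int n))) \<and>
     (\<exists>S. finite S \<and> (\<forall>a. vge v a 0 \<longrightarrow> (\<exists>s\<in>S. vge v (a - s) 1))) \<and>
     prime p \<and> vge v (of_nat p) 1"

type_synonym 'a mat2 = "'a^2^2"

definition SL2 :: "'a::field mat2 set" where
  "SL2 = {g. det g = 1}"

definition sl2 :: "'a::field mat2 set" where
  "sl2 = {X. trace X = 0}"

definition Ad :: "'a::field mat2 \<Rightarrow> 'a mat2 \<Rightarrow> 'a mat2" where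
  "Ad g X = g ** X ** matrix_inv g"

definition nilpotent_mat :: "'a::field mat2 \<Rightarrow> bool" where
  "nilpotent_mat X \<longleftrightarrow> (\<exists>n. (((**) X) ^^ n) (mat 1) = 0)"

definition orbit :: "'a::field mat2 \<Rightarrow> 'a mat2 set" where
  "orbit X = {Ad g X | g. g \<in> SL2}"

definition nil_orbit :: "'a::field mat2 set \<Rightarrow> bool" where
  "nil_orbit Ob \<longleftrightarrow> (\<exists>N\<in>sl2. nilpotent_mat N \<and> Ob = orbit N)"

definition vclosure :: "('a::field \<Rightarrow> int) \<Rightarrow> 'a mat2 set \<Rightarrow> 'a mat2 set" where
  "vclosure v S = {X. \<forall>n::int. \<exists>Y\<in>S. \<forall>i j. vge v ((X - Y) $ i $ j) (real_of_int n)}"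

definition orbit_le :: "('a::field \<Rightarrow> int) \<Rightarrow> 'a mat2 set \<Rightarrow> 'a mat2 set \<Rightarrow> bool" where
  "orbit_le v Ob Ob' \<longleftrightarrow> Ob \<subseteq> vclosure v Ob'"

text \<open>B(G) = G \<times> A / ~, where A = R is the standard apartment (diagonal torus).
  A point is represented by a pair (h, s) with h in SL2 and s in R; the
  representative of a point is irrelevant for the lattices below.
  At s in A the affine roots are \<alpha> + n with \<alpha>(s) = s, so
  g_{s,t} = {[[a,b],[c,-a]] : v(a) \<ge> t, v(b) \<ge> t - s, v(c) \<ge> t + s}.\<close>

definition BT :: "('a::field mat2 \<times> real) set" where
  "BT = {(h, s). h \<in> SL2}"

definition MP_std :: "('a::field \<Rightarrow> int) \<Rightarrow> real \<Rightarrow> real \<Rightarrow> 'a mat2 set" where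
  "MP_std v s t = {Y \<in> sl2. vge v (Y $ 1 $ 1) t \<and> vge v (Y $ 1 $ 2) (t - s)
                              \<and> vge v (Y $ 2 $ 1) (t + s)}"

definition MP :: "('a::field \<Rightarrow> int) \<Rightarrow> 'a mat2 \<times> real \<Rightarrow> real \<Rightarrow> 'a mat2 set" where
  "MP v x t = Ad (fst x) ` MP_std v (snd x) t"

definition MP_plus :: "('a::field \<Rightarrow> int) \<Rightarrow> 'a mat2 \<times> real \<Rightarrow> real \<Rightarrow> 'a mat2 set" where
  "MP_plus v x t = (\<Union>u\<in>{u. t < u}. MP v x u)"

text \<open>Dual lattices g*_{x,r}, with g* identified with g via the trace form.\<close>

definition MPd :: "('a::field \<Rightarrow> int) \<Rightarrow> 'a mat2 \<times> real \<Rightarrow> real \<Rightarrow> 'a mat2 set" where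
  "MPd v x r = {X \<in> sl2. \<forall>Y \<in> MP_plus v x (- r). vge v (trace (X ** Y)) 1}"

definition MPd_plus :: "('a::field \<Rightarrow> int) \<Rightarrow> 'a mat2 \<times> real \<Rightarrow> real \<Rightarrow> 'a mat2 set" where
  "MPd_plus v x r = (\<Union>u\<in>{u. r < u}. MPd v x u)"

text \<open>g*_{x,r} for extended real r: intersection of g*_{x,t} over real t \<le> r
  (equals g*_{x,r} for real r, and the intersection of all lattices for r = \<infinity>).\<close>

definition MPdE :: "('a::field \<Rightarrow> int) \<Rightarrow> 'a mat2 \<times> real \<Rightarrow> ereal \<Rightarrow> 'a mat2 set" where
  "MPdE v x r = {X. \<forall>t. ereal t \<le> r \<longrightarrow> X \<in> MPd v x t}"

definition depth_at :: "('a::field \<Rightarrow> int) \<Rightarrow> 'a mat2 \<times> real \<Rightarrow> 'a mat2 \<Rightarrow> real" where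
  "depth_at v x X = (THE t. X \<in> MPd v x t \<and> X \<notin> MPd_plus v x t)"

definition depth :: "('a::field \<Rightarrow> int) \<Rightarrow> 'a mat2 \<Rightarrow> ereal" where
  "depth v X = (SUP x\<in>BT. ereal (depth_at v x X))"

definition coset :: "'a::field mat2 \<Rightarrow> 'a mat2 set \<Rightarrow> 'a mat2 set" where
  "coset \<Gamma> L = (\<lambda>Y. \<Gamma> + Y) ` L"

definition meets_deg :: "('a::field \<Rightarrow> int) \<Rightarrow> 'a mat2 \<Rightarrow> 'a mat2 \<times> real \<Rightarrow> 'a mat2 set \<Rightarrow> bool" where
  "meets_deg v \<Gamma> x Ob \<longleftrightarrow> nil_orbit Ob \<and> Ob \<inter> coset \<Gamma> (MPd_plus v x (depth_at v x \<Gamma>)) \<noteq> {}"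

definition minorb :: "('a::field \<Rightarrow> int) \<Rightarrow> 'a mat2 \<Rightarrow> 'a mat2 \<times> real \<Rightarrow> 'a mat2 set" where
  "minorb v \<Gamma> x = (THE Ob. meets_deg v \<Gamma> x Ob \<and>
                      (\<forall>Ob'. meets_deg v \<Gamma> x Ob' \<longrightarrow> orbit_le v Ob' Ob \<longrightarrow> Ob' = Ob))"

definition Nil_supp :: "('a::field \<Rightarrow> int) \<Rightarrow> 'a mat2 \<Rightarrow> 'a mat2 set set" where
  "Nil_supp v \<Gamma> = {minorb v \<Gamma> x | x. x \<in> BT \<and> ereal (depth_at v x \<Gamma>) < depth v \<Gamma>}"

definition Nil_at :: "('a::field \<Rightarrow> int) \<Rightarrow> 'a mat2 \<Rightarrow> 'a mat2 \<times> real \<Rightarrow> 'a mat2 set set" where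
  "Nil_at v \<Gamma> x = {minorb v (Ad g \<Gamma>) x | g. g \<in> SL2 \<and>
                      ereal (depth_at v x (Ad g \<Gamma>)) < depth v \<Gamma>}"

end

theory Submission
  imports Defs
begin

definition M2 :: "'a \<Rightarrow> 'a \<Rightarrow> 'a \<Rightarrow> 'a \<Rightarrow> 'a::field mat2" where
  "M2 a b c d = (\<chi> i j. if i = 1 then (if j = 1 then a else b) else (if j = 1 then c else d))"

lemma M2_nth[simp]: "M2 a b c d $ 1 $ 1 = a" "M2 a b c d $ 1 $ 2 = b"
  "M2 a b c d $ 2 $ 1 = c" "M2 a b c d $ 2 $ 2 = d"
  by (simp_all add: M2_def)

lemma M2_eta: "(X::'a::field mat2) = M2 (X$1$1) (X$1$2) (X$2$1) (X$2$2)"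
  unfolding M2_def vec_eq_iff forall_2 by simp

lemma M2_eq_iff: "M2 a b c d = M2 a' b' c' d' \<longleftrightarrow> a = a' \<and> b = b' \<and> c = c' \<and> d = d'"
  by (metis M2_nth)

lemma M2_mult: "M2 a b c d ** M2 a' b' c' d' = M2 (a*a'+b*c') (a*b'+b*d') (c*a'+d*c') (c*b'+d*d')"
  by (subst M2_eta) (simp add: matrix_matrix_mult_def sum_2)

lemma M2_add: "M2 a b c d + M2 a' b' c' d' = M2 (a+a') (b+b') (c+c') (d+d')"
  by (subst M2_eta) simp

lemma M2_diff: "M2 a b c d - M2 a' b' c' d' = M2 (a-a') (b-b') (c-c') (d-d')"
  by (subst M2_eta) simp

lemma M2_zero: "(0::'a::field mat2) = M2 0 0 0 0"
  by (subst M2_eta) simp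

lemma M2_one: "(mat 1::'a::field mat2) = M2 1 0 0 1"
  by (subst M2_eta) (simp add: mat_def)

lemma M2_det: "det (M2 a b c d) = a*d - b*c"
  by (simp add: det_2)

lemma M2_trace: "trace (M2 a b c d) = a + d"
  by (simp add: trace_def sum_2)

lemma inv_unique:
  fixes A B :: "'a::field mat2"
  assumes "A ** B = mat 1" "B ** A = mat 1"
  shows "matrix_inv A = B"
proof -
  have "\<exists>A'. A ** A' = mat 1 \<and> A' ** A = mat 1" using assms by blast
  then have h: "A ** matrix_inv A = mat 1 \<and> matrix_inv A ** A = mat 1"
    unfolding matrix_inv_def by (rule someI_ex)
  have "matrix_inv A = matrix_inv A ** (A ** B)" using assms by (simp add: matrix_mul_rid)
  also have "\<dots> = (matrix_inv A ** A) ** B" by (simp add: matrix_mul_assoc)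
  also have "\<dots> = B" using h by (simp add: matrix_mul_lid)
  finally show ?thesis .
qed

lemma SL2_iff: "g \<in> SL2 \<longleftrightarrow> g$1$1 * g$2$2 - g$1$2 * g$2$1 = 1"
  by (simp add: SL2_def det_2)

lemma inv_M2: "a*d - b*c = (1::'a::field) \<Longrightarrow> matrix_inv (M2 a b c d) = M2 d (-b) (-c) a"
  by (rule inv_unique) (simp_all add: M2_mult M2_one algebra_simps)

lemma inv_SL2: "g \<in> SL2 \<Longrightarrow> matrix_inv g = M2 (g$2$2) (-g$1$2) (-g$2$1) (g$1$1)"
  using inv_M2[of "g$1$1" "g$2$2" "g$1$2" "g$2$1"] M2_eta[of g] by (simp add: SL2_iff)

lemma SL2_inv_mult: assumes "g \<in> SL2" shows "matrix_inv g ** g = mat 1" "g ** matrix_inv g = mat 1"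
  using assms by (subst (1 2) M2_eta[of g], simp add: inv_SL2 M2_mult M2_one SL2_iff algebra_simps)+

lemma SL2_mult: "g \<in> SL2 \<Longrightarrow> k \<in> SL2 \<Longrightarrow> g ** k \<in> SL2"
  by (simp add: SL2_def det_mul)

lemma SL2_inv: "g \<in> SL2 \<Longrightarrow> matrix_inv g \<in> SL2"
  by (simp add: inv_SL2 SL2_iff) (simp add: algebra_simps)

lemma SL2_one: "mat 1 \<in> SL2"
  by (simp add: SL2_def)

lemma inv_mult_SL2: assumes "g \<in> SL2" "k \<in> SL2"
  shows "matrix_inv (g ** k) = matrix_inv k ** matrix_inv g"
proof (rule inv_unique)
  have "g ** k ** (matrix_inv k ** matrix_inv g) = g ** (k ** matrix_inv k) ** matrix_inv g"
    by (simp add: matrix_mul_assoc)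
  then show "g ** k ** (matrix_inv k ** matrix_inv g) = mat 1"
    using SL2_inv_mult[OF assms(1)] SL2_inv_mult[OF assms(2)] by (simp add: matrix_mul_rid)
  have "matrix_inv k ** matrix_inv g ** (g ** k) = matrix_inv k ** (matrix_inv g ** g) ** k"
    by (simp add: matrix_mul_assoc)
  then show "matrix_inv k ** matrix_inv g ** (g ** k) = mat 1"
    using SL2_inv_mult[OF assms(1)] SL2_inv_mult[OF assms(2)] by (simp add: matrix_mul_rid)
qed

lemma inv_inv_SL2: "g \<in> SL2 \<Longrightarrow> matrix_inv (matrix_inv g) = g"
  by (rule inv_unique) (simp_all add: SL2_inv_mult)

lemma Ad_Ad: "g \<in> SL2 \<Longrightarrow> k \<in> SL2 \<Longrightarrow> Ad g (Ad k X) = Ad (g ** k) X"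
  by (simp add: Ad_def inv_mult_SL2 matrix_mul_assoc)

lemma Ad_one: "Ad (mat 1) X = X"
  using inv_unique[of "mat 1 :: 'a::field mat2" "mat 1"]
  by (simp add: Ad_def matrix_mul_lid matrix_mul_rid)

lemma Ad_inv_Ad: "g \<in> SL2 \<Longrightarrow> Ad (matrix_inv g) (Ad g X) = X"
  by (simp add: Ad_Ad SL2_inv SL2_inv_mult Ad_one)

lemma Ad_Ad_inv: "g \<in> SL2 \<Longrightarrow> Ad g (Ad (matrix_inv g) X) = X"
  by (simp add: Ad_Ad SL2_inv SL2_inv_mult Ad_one)

lemma mat_rdistrib: "((A::'a::field mat2) + B) ** C = A ** C + B ** C"
  by (simp add: matrix_matrix_mult_def vec_eq_iff sum.distrib algebra_simps)
lemma mat_ldistrib_sub: "(C::'a::field mat2) ** (A - B) = C ** A - C ** B"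
  by (simp add: matrix_matrix_mult_def vec_eq_iff sum_subtractf algebra_simps)
lemma mat_rdistrib_sub: "((A::'a::field mat2) - B) ** C = A ** C - B ** C"
  by (simp add: matrix_matrix_mult_def vec_eq_iff sum_subtractf algebra_simps)

lemma Ad_add: "Ad g (X + Y) = Ad g X + Ad g Y"
  by (simp add: Ad_def matrix_add_ldistrib mat_rdistrib)

lemma Ad_diff: "Ad g (X - Y) = Ad g X - Ad g Y"
  by (simp add: Ad_def mat_ldistrib_sub mat_rdistrib_sub)

lemma Ad_zero: "Ad g 0 = 0"
  by (simp add: Ad_def)

lemma det_Ad: "g \<in> SL2 \<Longrightarrow> det (Ad g X) = det X"
  using SL2_inv[of g] by (simp add: Ad_def det_mul SL2_def)

lemma trace_Ad: "g \<in> SL2 \<Longrightarrow> trace (Ad g X) = trace X"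
proof -
  assume g: "g \<in> SL2"
  have "trace (Ad g X) = trace ((g ** X) ** matrix_inv g)" by (simp add: Ad_def)
  also have "\<dots> = trace (matrix_inv g ** (g ** X))" by (rule trace_mul_sym)
  also have "\<dots> = trace ((matrix_inv g ** g) ** X)" by (simp add: matrix_mul_assoc)
  also have "\<dots> = trace X" using SL2_inv_mult[OF g] by (simp add: matrix_mul_lid)
  finally show ?thesis .
qed

lemma trace_Ad2: "g \<in> SL2 \<Longrightarrow> trace (Ad g X ** Ad g Y) = trace (X ** Y)"
proof -
  assume g: "g \<in> SL2"
  have "Ad g X ** Ad g Y = g ** (X ** ((matrix_inv g ** g) ** (Y ** matrix_inv g)))"
    by (simp add: Ad_def matrix_mul_assoc)
  also have "\<dots> = Ad g (X ** Y)"
    using SL2_inv_mult[OF g] by (simp add: Ad_def matrix_mul_assoc matrix_mul_lid)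
  finally have "Ad g X ** Ad g Y = Ad g (X ** Y)" .
  then show ?thesis using trace_Ad[OF g] by simp
qed

lemma sl2_Ad: "g \<in> SL2 \<Longrightarrow> Ad g X \<in> sl2 \<longleftrightarrow> X \<in> sl2"
  by (simp add: sl2_def trace_Ad)

lemma sl2_iff: "X \<in> sl2 \<longleftrightarrow> X$2$2 = - X$1$1"
  by (simp add: sl2_def trace_def sum_2 eq_neg_iff_add_eq_0 add.commute)

lemma Ad_M2: "p*t - q*r = 1 \<Longrightarrow> Ad (M2 p q r t) (M2 a b c d) = M2 p q r t ** M2 a b c d ** M2 t (-q) (-r) p"
  by (simp add: Ad_def inv_M2)

locale valF =
  fixes v :: "'a::field \<Rightarrow> int"
  assumes vmult: "x \<noteq> 0 \<Longrightarrow> y \<noteq> 0 \<Longrightarrow> v (x * y) = v x + v y"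
    and vultra: "x \<noteq> 0 \<Longrightarrow> y \<noteq> 0 \<Longrightarrow> x + y \<noteq> 0 \<Longrightarrow> min (v x) (v y) \<le> v (x + y)"
    and unif: "\<exists>\<pi>. \<pi> \<noteq> 0 \<and> v \<pi> = 1"
    and complete: "\<And>f :: nat \<Rightarrow> 'a.
        (\<forall>n::int. \<exists>N. \<forall>m\<ge>N. \<forall>k\<ge>N. vge v (f m - f k) (real_of_int n)) \<Longrightarrow>
        (\<exists>L. \<forall>n::int. \<exists>N. \<forall>m\<ge>N. vge v (f m - L) (real_of_int n))"
    and two: "(2::'a) \<noteq> 0" "v 2 = 0"
begin

lemma v1: "v 1 = 0"
  using vmult[of 1 1] by simp

lemma vneg: "v (- x) = v x"
proof (cases "x = 0")
  case False
  have "v ((-x)*(-x)) = v (x * x)" by simp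
  then show ?thesis using vmult[of "-x" "-x"] vmult[of x x] False by simp
qed simp

lemma vinv: "x \<noteq> 0 \<Longrightarrow> v (inverse x) = - v x"
  using vmult[of x "inverse x"] v1 by simp

lemma vdiv: "x \<noteq> 0 \<Longrightarrow> y \<noteq> 0 \<Longrightarrow> v (x / y) = v x - v y"
  by (simp add: divide_inverse vmult vinv)

lemma vge_0[simp]: "vge v 0 t"
  by (simp add: vge_def)

lemma vge_mono: "vge v a t \<Longrightarrow> t' \<le> t \<Longrightarrow> vge v a t'"
  by (auto simp: vge_def)

lemma vge_neg[simp]: "vge v (- a) t \<longleftrightarrow> vge v a t"
  by (simp add: vge_def vneg)

lemma vge_add: "vge v a t \<Longrightarrow> vge v b t \<Longrightarrow> vge v (a + b) t"
  unfolding vge_def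
proof (elim disjE)
  assume "t \<le> real_of_int (v a)" "t \<le> real_of_int (v b)"
  then show "a + b = 0 \<or> t \<le> real_of_int (v (a + b))"
    using vultra[of a b] by (cases "a = 0"; cases "b = 0"; cases "a + b = 0") force+
qed auto

lemma vge_diff: "vge v a t \<Longrightarrow> vge v b t \<Longrightarrow> vge v (a - b) t"
  using vge_add[of a t "-b"] by simp

lemma vge_mult: "vge v a t \<Longrightarrow> vge v b u \<Longrightarrow> vge v (a * b) (t + u)"
  by (cases "a = 0"; cases "b = 0") (auto simp: vge_def vmult)

lemma vge_all: assumes "\<And>n::int. vge v a (real_of_int n)" shows "a = 0"
proof (rule ccontr)
  assume "a \<noteq> 0"
  with assms[of "v a + 1"] show False by (simp add: vge_def)
qed

lemma vge_1[simp]: "vge v 1 0" "vge v 2 0"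
  by (simp_all add: vge_def v1 two)

lemma vge_inv2: "vge v (a / 2) t \<longleftrightarrow> vge v a t"
  by (cases "a = 0") (simp_all add: vge_def vdiv two)

lemma vge_int: "vge v a t \<longleftrightarrow> vge v a (real_of_int \<lceil>t\<rceil>)"
  by (simp add: vge_def ceiling_le_iff)

lemma strict_ultra: assumes "x \<noteq> 0" "y = 0 \<or> v x < v y" shows "x + y \<noteq> 0 \<and> v (x + y) = v x"
proof (cases "y = 0")
  case False
  with assms have lt: "v x < v y" by simp
  have ne: "x + y \<noteq> 0"
  proof
    assume "x + y = 0" then have "y = - x" by (simp add: add_eq_0_iff2)
    with lt show False by (simp add: vneg)
  qed
  have 1: "v x \<le> v (x + y)" using vultra[OF assms(1) False ne] lt by simp
  have "x = (x + y) + (- y)" by simp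
  then have "min (v (x+y)) (v (-y)) \<le> v x" using vultra[OF ne, of "-y"] False assms(1) by (metis neg_equal_0_iff_equal)
  then have "v (x + y) \<le> v x" using lt by (simp add: vneg)
  with 1 ne show ?thesis by simp
qed (simp add: assms)

lemma hensel:
  assumes u: "vge v (u - 1) 1"
  shows "\<exists>w. w \<noteq> 0 \<and> w * w = u"
proof -
  define w :: "nat \<Rightarrow> 'a" where "w = rec_nat 1 (\<lambda>n x. x + (u - x*x)/2)"
  have w0: "w 0 = 1" and wS: "\<And>n. w (Suc n) = w n + (u - w n * w n)/2" by (simp_all add: w_def)
  have inv: "vge v (w n - 1) 1 \<and> vge v (u - w n * w n) (real n + 1)" for n
  proof (induction n)
    case 0 then show ?case using u by (simp add: w0)
  next
    case (Suc n)
    define e where "e = u - w n * w n"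
    have e: "vge v e (real n + 1)" and w1: "vge v (w n - 1) 1" using Suc by (simp_all add: e_def)
    have eq: "w (Suc n) - 1 = (w n - 1) + e / 2" by (simp add: wS e_def)
    have "vge v (e / 2) 1" using vge_mono[OF e] by (simp add: vge_inv2)
    then have "vge v ((w n - 1) + e / 2) 1" by (rule vge_add[OF w1])
    then have A: "vge v (w (Suc n) - 1) 1" using eq by metis
    have "u - w (Suc n) * w (Suc n) = e * (- (w n - 1)) + (- (e * e / 4))"
    proof -
      have f: "(4::'a) \<noteq> 0" using two(1) by (metis mult_2_right numeral_Bit0 mult_eq_0_iff one_add_one)
      show ?thesis unfolding wS e_def using two(1) f by (simp add: field_simps)
    qed
    moreover have "vge v (e * (- (w n - 1))) (real (Suc n) + 1)"
    proof -
      have "vge v (- (w n - 1)) 1" using w1 by (simp only: vge_neg)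
      from vge_mult[OF e this] show ?thesis by (simp add: add.commute)
    qed
    moreover have "vge v (e * e / 4) (real (Suc n) + 1)"
    proof -
      have "vge v (e * e) ((real n + 1) + (real n + 1))" by (rule vge_mult[OF e e])
      then have "vge v (e * e) (real (Suc n) + 1)" by (rule vge_mono) simp
      then show ?thesis using vge_inv2[of "e*e/2"] vge_inv2[of "e*e"] by simp
    qed
    ultimately have B: "vge v (u - w (Suc n) * w (Suc n)) (real (Suc n) + 1)"
      by (metis vge_add vge_neg)
    from A B show ?case by simp
  qed
  have step: "vge v (w (Suc n) - w n) (real n + 1)" for n
    using inv[of n] by (simp add: wS vge_inv2)
  have cau: "k \<le> m \<Longrightarrow> vge v (w m - w k) (real k + 1)" for k m
  proof (induction m)
    case 0 then show ?case by simp
  next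
    case (Suc m)
    show ?case
    proof (cases "k = Suc m")
      case False
      then have "k \<le> m" using Suc by simp
      have "w (Suc m) - w k = (w (Suc m) - w m) + (w m - w k)" by simp
      moreover have "vge v (w (Suc m) - w m) (real k + 1)" by (rule vge_mono[OF step[of m]]) (simp add: \<open>k \<le> m\<close>)
      ultimately show ?thesis using Suc.IH[OF \<open>k \<le> m\<close>] by (metis vge_add)
    qed simp
  qed
  have "\<forall>n::int. \<exists>N. \<forall>m\<ge>N. \<forall>k\<ge>N. vge v (w m - w k) (real_of_int n)"
  proof
    fix n :: int
    show "\<exists>N. \<forall>m\<ge>N. \<forall>k\<ge>N. vge v (w m - w k) (real_of_int n)"
    proof (intro exI allI impI)
      fix m k assume "nat n \<le> m" "nat n \<le> k"
      show "vge v (w m - w k) (real_of_int n)"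
      proof (cases "k \<le> m")
        case True
        show ?thesis by (rule vge_mono[OF cau[OF True]]) (use \<open>nat n \<le> k\<close> in linarith)
      next
        case False
        then have "vge v (w k - w m) (real m + 1)" by (intro cau) simp
        then have "vge v (- (w k - w m)) (real_of_int n)" by (simp only: vge_neg) (rule vge_mono, assumption, use \<open>nat n \<le> m\<close> in linarith)
        then show ?thesis by simp
      qed
    qed
  qed
  from complete[OF this] obtain L where L: "\<And>n::int. \<exists>N. \<forall>m\<ge>N. vge v (w m - L) (real_of_int n)" by blast
  have "L * L - u = 0"
  proof (rule vge_all)
    fix n :: int
    define n' where "n' = max n 1"
    obtain N where N: "\<And>m. m \<ge> N \<Longrightarrow> vge v (w m - L) (real_of_int n')" using L by blast
    define m where "m = max N (nat n')"
    have wL: "vge v (L - w m) (real_of_int n')" using N[of m] by (simp add: m_def) (metis minus_diff_eq vge_neg)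
    have "L + w m = (L - w m) + (2 * (w m - 1) + 2)" by simp
    moreover have "vge v (L - w m) 0" using wL by (rule vge_mono) (simp add: n'_def)
    moreover have "vge v (2 * (w m - 1)) 0" using vge_mult[of 2 0 "w m - 1" 1] inv[of m] by (simp add: vge_mono)
    ultimately have s: "vge v (L + w m) 0" by (metis vge_add vge_1(2))
    have "L * L - u = (L - w m) * (L + w m) + (- (u - w m * w m))" by (simp add: algebra_simps)
    moreover have "vge v ((L - w m) * (L + w m)) (real_of_int n)"
      using vge_mult[OF wL s] by (rule vge_mono) (simp add: n'_def)
    moreover have "vge v (- (u - w m * w m)) (real_of_int n)"
    proof -
      have "vge v (u - w m * w m) (real m + 1)" using inv[of m] by simp
      moreover have "real_of_int n \<le> real m + 1" unfolding m_def n'_def by linarith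
      ultimately have "vge v (u - w m * w m) (real_of_int n)" by (rule vge_mono)
      then show ?thesis by (simp only: vge_neg)
    qed
    ultimately show "vge v (L * L - u) (real_of_int n)" by (metis vge_add)
  qed
  moreover have "u \<noteq> 0" using u by (auto simp: vge_def vneg v1)
  ultimately show ?thesis by (intro exI[of _ L]) auto
qed

end

definition vgt :: "('a::field \<Rightarrow> int) \<Rightarrow> 'a \<Rightarrow> real \<Rightarrow> bool" where
  "vgt v a t \<longleftrightarrow> a = 0 \<or> t < real_of_int (v a)"

definition MPp_std :: "('a::field \<Rightarrow> int) \<Rightarrow> real \<Rightarrow> real \<Rightarrow> 'a mat2 set" where
  "MPp_std v s t = {Y \<in> sl2. vgt v (Y $ 1 $ 1) t \<and> vgt v (Y $ 1 $ 2) (t - s)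
                              \<and> vgt v (Y $ 2 $ 1) (t + s)}"

definition tight :: "('a::field \<Rightarrow> int) \<Rightarrow> real \<Rightarrow> 'a mat2 \<Rightarrow> real \<Rightarrow> bool" where
  "tight v s Y t \<longleftrightarrow> Y \<in> MP_std v s t \<and> Y \<notin> MPp_std v s t"

lemma Ad_image_iff: "h \<in> SL2 \<Longrightarrow> X \<in> Ad h ` S \<longleftrightarrow> Ad (matrix_inv h) X \<in> S"
proof
  assume "h \<in> SL2" "X \<in> Ad h ` S"
  then show "Ad (matrix_inv h) X \<in> S" using Ad_inv_Ad by force
next
  assume h: "h \<in> SL2" "Ad (matrix_inv h) X \<in> S"
  then have "Ad h (Ad (matrix_inv h) X) \<in> Ad h ` S" by blast
  then show "X \<in> Ad h ` S" using Ad_Ad_inv[OF h(1)] by simp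
qed

lemma sl2_M2: "Y \<in> sl2 \<Longrightarrow> Y = M2 (Y$1$1) (Y$1$2) (Y$2$1) (- Y$1$1)"
  using M2_eta[of Y] by (simp add: sl2_iff)

context valF
begin

definition upi where "upi = (SOME \<pi>. \<pi> \<noteq> 0 \<and> v \<pi> = 1)"

lemma upi: "upi \<noteq> 0" "v upi = 1"
  using someI_ex[OF unif] by (simp_all add: upi_def)

lemma vpow: "upi ^ n \<noteq> 0 \<and> v (upi ^ n) = int n"
  by (induction n) (simp_all add: v1 upi vmult)

lemma vpowi: "upi powi k \<noteq> 0 \<and> v (upi powi k) = k"
proof (cases "k \<ge> 0")
  case True
  then show ?thesis using vpow[of "nat k"] by (simp add: power_int_def)
next
  case False
  then show ?thesis using vpow[of "nat (-k)"] by (simp add: power_int_def vinv power_inverse)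
qed

lemma vgt_vge: "vgt v a t \<longleftrightarrow> vge v a (real_of_int (\<lfloor>t\<rfloor> + 1))"
proof -
  have h: "t < real_of_int m \<longleftrightarrow> real_of_int (\<lfloor>t\<rfloor> + 1) \<le> real_of_int m" for m :: int
    by (simp only: of_int_le_iff floor_less_iff[symmetric]) linarith
  show ?thesis unfolding vgt_def vge_def using h by blast
qed

lemma vge_vgt: "vge v a t \<Longrightarrow> t' < t \<Longrightarrow> vgt v a t'"
  by (auto simp: vgt_def vge_def)

lemma vgt_mono: "vgt v a t \<Longrightarrow> t' \<le> t \<Longrightarrow> vgt v a t'"
  by (auto simp: vgt_def)

lemma vgt_vge_weak: "vgt v a t \<Longrightarrow> vge v a t"
  by (auto simp: vgt_def vge_def)

lemma vgt_add: "vgt v a t \<Longrightarrow> vgt v b t \<Longrightarrow> vgt v (a + b) t"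
  unfolding vgt_vge by (rule vge_add)

lemma vgt_neg[simp]: "vgt v (- a) t \<longleftrightarrow> vgt v a t"
  by (simp add: vgt_def vneg)

lemma vgt_diff: "vgt v a t \<Longrightarrow> vgt v b t \<Longrightarrow> vgt v (a - b) t"
  using vgt_add[of a t "-b"] by simp

lemma vge_vgt_mult: "vge v a t \<Longrightarrow> vgt v b u \<Longrightarrow> vgt v (a * b) (t + u)"
  by (cases "a = 0"; cases "b = 0") (auto simp: vge_def vgt_def vmult)

lemma vgt_0_vge1: "vgt v a 0 \<Longrightarrow> vge v a 1"
  by (auto simp: vgt_def vge_def)

lemma vgt_0[simp]: "vgt v 0 t"
  by (simp add: vgt_def)

lemma MPp_union: "(\<Union>u\<in>{u. t < u}. MP_std v s u) = MPp_std v s t"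
proof
  show "(\<Union>u\<in>{u. t < u}. MP_std v s u) \<subseteq> MPp_std v s t"
    by (auto simp: MP_std_def MPp_std_def intro: vge_vgt)
next
  show "MPp_std v s t \<subseteq> (\<Union>u\<in>{u. t < u}. MP_std v s u)"
  proof
    fix Y assume Y: "Y \<in> MPp_std v s t"
    define ua where "ua = (if Y$1$1 = 0 then t + 1 else real_of_int (v (Y$1$1)))"
    define ub where "ub = (if Y$1$2 = 0 then t + 1 else real_of_int (v (Y$1$2)) + s)"
    define uc where "uc = (if Y$2$1 = 0 then t + 1 else real_of_int (v (Y$2$1)) - s)"
    define u where "u = min ua (min ub uc)"
    have "t < u" using Y by (auto simp: MPp_std_def vgt_def u_def ua_def ub_def uc_def)
    moreover have "Y \<in> MP_std v s u" using Y
      by (auto simp: MPp_std_def MP_std_def vge_def u_def ua_def ub_def uc_def)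
    ultimately show "Y \<in> (\<Union>u\<in>{u. t < u}. MP_std v s u)" by blast
  qed
qed

lemma trace_M2_sl2: "trace (M2 a b c (-a) ** M2 a' b' c' (-a')) = 2 * a * a' + b * c' + c * b'"
  by (simp add: M2_mult M2_trace algebra_simps)

lemma dual_std: "{X \<in> sl2. \<forall>Y \<in> MPp_std v s (- r). vge v (trace (X ** Y)) 1} = MP_std v s r"
proof
  show "MP_std v s r \<subseteq> {X \<in> sl2. \<forall>Y \<in> MPp_std v s (- r). vge v (trace (X ** Y)) 1}"
  proof (safe)
    fix X assume X: "X \<in> MP_std v s r"
    then show "X \<in> sl2" by (simp add: MP_std_def)
    fix Y assume Y: "Y \<in> MPp_std v s (- r)"
    have XY: "X = M2 (X$1$1) (X$1$2) (X$2$1) (- X$1$1)" "Y = M2 (Y$1$1) (Y$1$2) (Y$2$1) (- Y$1$1)"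
      using X Y by (simp_all add: sl2_M2 MP_std_def MPp_std_def)
    have 1: "vgt v (X$1$1 * Y$1$1) 0" using vge_vgt_mult[of "X$1$1" r "Y$1$1" "-r"] X Y
      by (simp add: MP_std_def MPp_std_def)
    have 2: "vgt v (X$1$2 * Y$2$1) 0" using vge_vgt_mult[of "X$1$2" "r - s" "Y$2$1" "-r + s"] X Y
      by (simp add: MP_std_def MPp_std_def)
    have 3: "vgt v (X$2$1 * Y$1$2) 0" using vge_vgt_mult[of "X$2$1" "r + s" "Y$1$2" "-r - s"] X Y
      by (simp add: MP_std_def MPp_std_def)
    have "vge v (2 * (X$1$1 * Y$1$1)) 1" using vge_mult[OF vge_1(2) vgt_0_vge1[OF 1]] by simp
    then have "vge v (2 * (X$1$1 * Y$1$1) + X$1$2 * Y$2$1 + X$2$1 * Y$1$2) 1"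
      using vgt_0_vge1[OF 2] vgt_0_vge1[OF 3] by (intro vge_add)
    then show "vge v (trace (X ** Y)) 1"
      by (subst XY(1), subst XY(2), simp only: trace_M2_sl2) (simp add: mult.assoc)
  qed
next
  show "{X \<in> sl2. \<forall>Y \<in> MPp_std v s (- r). vge v (trace (X ** Y)) 1} \<subseteq> MP_std v s r"
  proof safe
    fix X assume X: "X \<in> sl2" and H: "\<forall>Y \<in> MPp_std v s (- r). vge v (trace (X ** Y)) 1"
    have XE: "X = M2 (X$1$1) (X$1$2) (X$2$1) (- X$1$1)" using X by (simp add: sl2_M2)
    have tr: "trace (X ** M2 a b c (-a)) = 2 * X$1$1 * a + X$1$2 * c + X$2$1 * b" for a b c
      by (subst XE, simp only: trace_M2_sl2)
    have sl: "M2 a b c (-a) \<in> sl2" for a b c :: 'a by (simp add: sl2_iff)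
    have key: "vge v (x * upi powi k) 1 \<Longrightarrow> vge v x (1 - real_of_int k)" for x k
      using vpowi[of k] by (cases "x = 0") (auto simp: vge_def vmult)
    define ka where "ka = \<lfloor>- r\<rfloor> + 1"
    have "vge v (trace (X ** M2 ((upi powi ka)) 0 0 (- (upi powi ka)))) 1"
      using H sl[of "(upi powi ka)" 0 0] vpowi[of ka]
      by (auto simp: MPp_std_def vgt_def ka_def) linarith?
    then have "vge v (2 * X$1$1 * (upi powi ka)) 1" by (simp add: tr)
    then have "vge v (X$1$1) r"
    proof -
      assume h: "vge v (2 * X$1$1 * (upi powi ka)) 1"
      have "vge v (2 * X$1$1) (1 - real_of_int ka)" by (rule key[OF h])
      then have "vge v (X$1$1) (1 - real_of_int ka)" by (cases "X$1$1 = 0") (auto simp: vge_def vmult two)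
      then show ?thesis by (rule vge_mono) (simp add: ka_def; linarith)
    qed
    define kb where "kb = \<lfloor>s - r\<rfloor> + 1"
    have "vge v (trace (X ** M2 0 0 ((upi powi kb)) (- 0))) 1"
      using H sl[of 0 0 "(upi powi kb)"] vpowi[of kb]
      by (auto simp: MPp_std_def vgt_def kb_def) linarith?
    then have "vge v (X$1$2 * (upi powi kb)) 1" using tr[of 0 0 "upi powi kb"] by simp
    then have "vge v (X$1$2) (r - s)" by (rule vge_mono[OF key]) (simp add: kb_def; linarith)
    define kc where "kc = \<lfloor>- r - s\<rfloor> + 1"
    have "vge v (trace (X ** M2 0 ((upi powi kc)) 0 (- 0))) 1"
      using H sl[of 0 "(upi powi kc)" 0] vpowi[of kc]
      by (auto simp: MPp_std_def vgt_def kc_def) linarith?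
    then have "vge v (X$2$1 * (upi powi kc)) 1" using tr[of 0 "upi powi kc" 0] by simp
    then have "vge v (X$2$1) (r + s)" by (rule vge_mono[OF key]) (simp add: kc_def; linarith)
    show "X \<in> MP_std v s r" using X \<open>vge v (X$1$1) r\<close> \<open>vge v (X$1$2) (r - s)\<close> \<open>vge v (X$2$1) (r + s)\<close>
      by (simp add: MP_std_def)
  qed
qed

end

context valF
begin

lemma MP_std_M2: "M2 a b c (-a) \<in> MP_std v s t \<longleftrightarrow> vge v a t \<and> vge v b (t - s) \<and> vge v c (t + s)"
  by (simp add: MP_std_def sl2_iff)

lemma MPp_std_M2: "M2 a b c (-a) \<in> MPp_std v s t \<longleftrightarrow> vgt v a t \<and> vgt v b (t - s) \<and> vgt v c (t + s)"
  by (simp add: MPp_std_def sl2_iff)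

lemma MP_std_M2': "M2 a b c 0 \<in> MP_std v s t \<longleftrightarrow> a = 0 \<and> vge v b (t - s) \<and> vge v c (t + s)"
  by (auto simp: MP_std_def sl2_iff)

lemma MPp_std_M2': "M2 a b c 0 \<in> MPp_std v s t \<longleftrightarrow> a = 0 \<and> vgt v b (t - s) \<and> vgt v c (t + s)"
  by (auto simp: MPp_std_def sl2_iff)

lemma tight_M2: "tight v s (M2 a b c (-a)) d \<longleftrightarrow>
   vge v a d \<and> vge v b (d - s) \<and> vge v c (d + s) \<and> \<not> (vgt v a d \<and> vgt v b (d - s) \<and> vgt v c (d + s))"
  by (simp add: tight_def MP_std_M2 MPp_std_M2)

lemma tight_unique: assumes "tight v s Y t1" "tight v s Y t2" shows "t1 = t2"
proof (rule ccontr)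
  assume "t1 \<noteq> t2"
  then consider "t1 < t2" | "t2 < t1" by linarith
  then show False
  proof cases
    case 1
    then have "Y \<in> MPp_std v s t1" using assms(2) unfolding tight_def MPp_union[symmetric] by blast
    then show False using assms(1) by (simp add: tight_def)
  next
    case 2
    then have "Y \<in> MPp_std v s t2" using assms(1) unfolding tight_def MPp_union[symmetric] by blast
    then show False using assms(2) by (simp add: tight_def)
  qed
qed

lemma tight_exists: assumes "Y \<in> sl2" "Y \<noteq> 0" shows "\<exists>t. tight v s Y t"
proof -
  define a b c where "a = Y$1$1" "b = Y$1$2" "c = Y$2$1"
  have Y: "Y = M2 a b c (-a)" using assms(1) by (simp add: sl2_M2 a_b_c_def)
  define S where "S = (if a = 0 then {} else {real_of_int (v a)}) \<union> (if b = 0 then {} else {real_of_int (v b) + s})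
     \<union> (if c = 0 then {} else {real_of_int (v c) - s})"
  have fin: "finite S" by (simp add: S_def)
  have ne: "S \<noteq> {}" using assms(2) Y by (auto simp: S_def M2_zero M2_eq_iff)
  define t where "t = Min S"
  have tS: "t \<in> S" using fin ne by (simp add: t_def)
  have le: "\<And>x. x \<in> S \<Longrightarrow> t \<le> x" using fin by (simp add: t_def)
  have "tight v s Y t" unfolding Y tight_M2
  proof (intro conjI)
    show "vge v a t" using le[of "real_of_int (v a)"] by (cases "a = 0") (auto simp: vge_def S_def)
    show "vge v b (t - s)" using le[of "real_of_int (v b) + s"] by (cases "b = 0") (auto simp: vge_def S_def)
    show "vge v c (t + s)" using le[of "real_of_int (v c) - s"] by (cases "c = 0") (auto simp: vge_def S_def)
    show "\<not> (vgt v a t \<and> vgt v b (t - s) \<and> vgt v c (t + s))"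
      using tS by (auto simp: vgt_def S_def split: if_splits)
  qed
  then show ?thesis by blast
qed

lemma tight_le_det: assumes "tight v s (M2 a b c (-a)) d" "a*a + b*c \<noteq> 0"
  shows "2 * d \<le> real_of_int (v (a*a + b*c))"
proof -
  have "vge v (a*a) (d + d)" using assms(1) by (intro vge_mult) (auto simp: tight_M2)
  moreover have "vge v (b*c) ((d - s) + (d + s))" using assms(1) by (intro vge_mult) (auto simp: tight_M2)
  ultimately have "vge v (a*a + b*c) (2 * d)" by (intro vge_add) simp_all
  then show ?thesis using assms(2) by (simp add: vge_def)
qed

lemma vgt_vgt_mult: "vgt v a t \<Longrightarrow> vgt v b u \<Longrightarrow> vgt v (a * b) (t + u)"
  using vge_vgt_mult[OF vgt_vge_weak] by blast

lemma aonly: assumes "tight v s (M2 a b c (-a)) d"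
  "\<not> (b \<noteq> 0 \<and> real_of_int (v b) + s = d)" "\<not> (c \<noteq> 0 \<and> real_of_int (v c) - s = d)"
  shows "a \<noteq> 0 \<and> real_of_int (v a) = d \<and> vgt v b (d - s) \<and> vgt v c (d + s)"
  using assms by (auto simp: tight_M2 vge_def vgt_def)

lemma aonly_nonnil: assumes "a \<noteq> 0" "real_of_int (v a) = d" "vgt v b (d - s)" "vgt v c (d + s)"
  shows "a*a + b*c \<noteq> 0 \<and> real_of_int (v (a*a + b*c)) = 2 * d"
proof -
  have aa: "a*a \<noteq> 0" "real_of_int (v (a*a)) = 2 * d" using assms by (simp_all add: vmult)
  have "vgt v (b*c) ((d - s) + (d + s))" using assms(3,4) by (rule vgt_vgt_mult)
  then have "b*c = 0 \<or> v (a*a) < v (b*c)" using aa unfolding vgt_def by (smt (verit) of_int_less_iff)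
  from strict_ultra[OF aa(1) this] aa show ?thesis by simp
qed

lemma lead: assumes "tight v s (M2 a b c (-a)) d" "a*a + b*c = 0 \<or> 2 * d < real_of_int (v (a*a + b*c))"
  shows "(b \<noteq> 0 \<and> real_of_int (v b) + s = d) \<or> (c \<noteq> 0 \<and> real_of_int (v c) - s = d)"
proof (rule ccontr)
  assume "\<not> ?thesis"
  then have "a \<noteq> 0 \<and> real_of_int (v a) = d \<and> vgt v b (d - s) \<and> vgt v c (d + s)"
    using aonly[OF assms(1)] by blast
  then have "a*a + b*c \<noteq> 0 \<and> real_of_int (v (a*a + b*c)) = 2 * d" using aonly_nonnil by blast
  with assms(2) show False by simp
qed

lemma bcase:
  assumes t: "tight v s (M2 a b c (-a)) d" and q: "a*a + b*c = 0 \<or> 2 * d < real_of_int (v (a*a + b*c))"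
    and b: "b \<noteq> 0" "real_of_int (v b) + s = d"
  shows "M2 a b (-(a*a)/b) (-a) - M2 a b c (-a) = M2 0 0 (-(a*a + b*c)/b) 0"
    and "\<And>t. a*a + b*c = 0 \<or> 2 * t \<le> real_of_int (v (a*a + b*c)) \<Longrightarrow> M2 0 0 (-(a*a + b*c)/b) 0 \<in> MP_std v s t"
    and "\<And>s'. s' \<le> s \<Longrightarrow> tight v s' (M2 a b c (-a)) (real_of_int (v b) + s')
             \<and> M2 0 0 (-(a*a + b*c)/b) 0 \<in> MPp_std v s' (real_of_int (v b) + s')"
proof -
  show "M2 a b (-(a*a)/b) (-a) - M2 a b c (-a) = M2 0 0 (-(a*a + b*c)/b) 0"
    using b by (simp add: M2_diff field_simps)
  define q where "q = a*a + b*c"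
  have vq: "q \<noteq> 0 \<Longrightarrow> real_of_int (v (-q/b)) = real_of_int (v q) - real_of_int (v b)"
    using b by (simp add: vdiv vneg)
  {
    fix t assume "a*a + b*c = 0 \<or> 2 * t \<le> real_of_int (v (a*a + b*c))"
    then have h: "q = 0 \<or> 2 * t \<le> real_of_int (v q)" by (simp add: q_def)
    show "M2 0 0 (-(a*a + b*c)/b) 0 \<in> MP_std v s t"
    proof (cases "q = 0")
      case True then show ?thesis by (simp add: q_def MP_std_M2')
    next
      case False
      have "2 * d \<le> real_of_int (v q)" using tight_le_det[OF t] False by (simp add: q_def)
      then have "vge v (-q/b) (t + s)" using vq[OF False] h False b by (simp add: vge_def)
      then show ?thesis by (simp add: q_def MP_std_M2')
    qed
  }
  {
    fix s' assume s': "s' \<le> s"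
    have "tight v s' (M2 a b c (-a)) (real_of_int (v b) + s')"
      unfolding tight_M2
    proof (intro conjI)
      show "vge v a (real_of_int (v b) + s')" using t b s' by (auto simp: tight_M2 intro: vge_mono)
      show "vge v b (real_of_int (v b) + s' - s')" by (simp add: vge_def)
      show "vge v c (real_of_int (v b) + s' + s')" using t b s' by (auto simp: tight_M2 intro: vge_mono)
      show "\<not> (vgt v a (real_of_int (v b) + s') \<and> vgt v b (real_of_int (v b) + s' - s') \<and> vgt v c (real_of_int (v b) + s' + s'))"
        using b by (simp add: vgt_def)
    qed
    moreover have "M2 0 0 (-(a*a + b*c)/b) 0 \<in> MPp_std v s' (real_of_int (v b) + s')"
    proof (cases "q = 0")
      case True then show ?thesis by (simp add: q_def MPp_std_M2')
    next
      case False
      have "2 * d < real_of_int (v q)" using q False by (simp add: q_def)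
      then have "vgt v (-q/b) (real_of_int (v b) + s' + s')" using vq[OF False] b s' by (simp add: vgt_def)
      then show ?thesis by (simp add: q_def MPp_std_M2')
    qed
    ultimately show "tight v s' (M2 a b c (-a)) (real_of_int (v b) + s')
             \<and> M2 0 0 (-(a*a + b*c)/b) 0 \<in> MPp_std v s' (real_of_int (v b) + s')" by blast
  }
qed

lemma ccase:
  assumes t: "tight v s (M2 a b c (-a)) d" and q: "a*a + b*c = 0 \<or> 2 * d < real_of_int (v (a*a + b*c))"
    and c: "c \<noteq> 0" "real_of_int (v c) - s = d"
  shows "M2 a (-(a*a)/c) c (-a) - M2 a b c (-a) = M2 0 (-(a*a + b*c)/c) 0 0"
    and "\<And>t. a*a + b*c = 0 \<or> 2 * t \<le> real_of_int (v (a*a + b*c)) \<Longrightarrow> M2 0 (-(a*a + b*c)/c) 0 0 \<in> MP_std v s t"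
    and "\<And>s'. s \<le> s' \<Longrightarrow> tight v s' (M2 a b c (-a)) (real_of_int (v c) - s')
             \<and> M2 0 (-(a*a + b*c)/c) 0 0 \<in> MPp_std v s' (real_of_int (v c) - s')"
proof -
  show "M2 a (-(a*a)/c) c (-a) - M2 a b c (-a) = M2 0 (-(a*a + b*c)/c) 0 0"
    using c by (simp add: M2_diff field_simps)
  define q where "q = a*a + b*c"
  have vq: "q \<noteq> 0 \<Longrightarrow> real_of_int (v (-q/c)) = real_of_int (v q) - real_of_int (v c)"
    using c by (simp add: vdiv vneg)
  {
    fix t assume "a*a + b*c = 0 \<or> 2 * t \<le> real_of_int (v (a*a + b*c))"
    then have h: "q = 0 \<or> 2 * t \<le> real_of_int (v q)" by (simp add: q_def)
    show "M2 0 (-(a*a + b*c)/c) 0 0 \<in> MP_std v s t"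
    proof (cases "q = 0")
      case True then show ?thesis by (simp add: q_def MP_std_M2')
    next
      case False
      have "2 * d \<le> real_of_int (v q)" using tight_le_det[OF t] False by (simp add: q_def)
      then have "vge v (-q/c) (t - s)" using vq[OF False] h False c by (simp add: vge_def)
      then show ?thesis by (simp add: q_def MP_std_M2')
    qed
  }
  {
    fix s' assume s': "s \<le> s'"
    have "tight v s' (M2 a b c (-a)) (real_of_int (v c) - s')"
      unfolding tight_M2
    proof (intro conjI)
      show "vge v a (real_of_int (v c) - s')" using t c s' by (auto simp: tight_M2 intro: vge_mono)
      show "vge v c (real_of_int (v c) - s' + s')" by (simp add: vge_def)
      show "vge v b (real_of_int (v c) - s' - s')" using t c s' by (auto simp: tight_M2 intro: vge_mono)
      show "\<not> (vgt v a (real_of_int (v c) - s') \<and> vgt v b (real_of_int (v c) - s' - s') \<and> vgt v c (real_of_int (v c) - s' + s'))"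
        using c by (simp add: vgt_def)
    qed
    moreover have "M2 0 (-(a*a + b*c)/c) 0 0 \<in> MPp_std v s' (real_of_int (v c) - s')"
    proof (cases "q = 0")
      case True then show ?thesis by (simp add: q_def MPp_std_M2')
    next
      case False
      have "2 * d < real_of_int (v q)" using q False by (simp add: q_def)
      then have "vgt v (-q/c) (real_of_int (v c) - s' - s')" using vq[OF False] c s' by (simp add: vgt_def)
      then show ?thesis by (simp add: q_def MPp_std_M2')
    qed
    ultimately show "tight v s' (M2 a b c (-a)) (real_of_int (v c) - s')
             \<and> M2 0 (-(a*a + b*c)/c) 0 0 \<in> MPp_std v s' (real_of_int (v c) - s')" by blast
  }
qed

end

lemma SL2_M2: "M2 p q r t \<in> SL2 \<longleftrightarrow> p*t - q*r = 1"
  by (simp add: SL2_iff)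

lemma orbit_Ad: assumes g: "g \<in> SL2" shows "orbit (Ad g X) = orbit X"
proof
  show "orbit (Ad g X) \<subseteq> orbit X"
  proof
    fix Y assume "Y \<in> orbit (Ad g X)"
    then obtain k where k: "k \<in> SL2" "Y = Ad k (Ad g X)" by (auto simp: orbit_def)
    then have "Y = Ad (k ** g) X" using g by (simp add: Ad_Ad)
    moreover have "k ** g \<in> SL2" using k g by (simp add: SL2_mult)
    ultimately show "Y \<in> orbit X" unfolding orbit_def by blast
  qed
  show "orbit X \<subseteq> orbit (Ad g X)"
  proof
    fix Y assume "Y \<in> orbit X"
    then obtain k where k: "k \<in> SL2" "Y = Ad k X" by (auto simp: orbit_def)
    have "Ad (k ** matrix_inv g) (Ad g X) = Ad ((k ** matrix_inv g) ** g) X"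
      using g k by (simp add: Ad_Ad SL2_mult SL2_inv)
    also have "\<dots> = Ad k X" using SL2_inv_mult[OF g] by (simp add: matrix_mul_assoc[symmetric] matrix_mul_rid)
    finally have "Y = Ad (k ** matrix_inv g) (Ad g X)" using k by simp
    moreover have "k ** matrix_inv g \<in> SL2" using k g by (simp add: SL2_mult SL2_inv)
    ultimately show "Y \<in> orbit (Ad g X)" unfolding orbit_def by blast
  qed
qed

lemma orbit_self: "X \<in> orbit X"
proof -
  have "X = Ad (mat 1) X" by (simp add: Ad_one)
  then show ?thesis unfolding orbit_def using SL2_one by blast
qed

lemma nil_b: assumes "b \<noteq> 0" "a*a + b*c = 0"
  shows "orbit (M2 a b c (-a)) = orbit (M2 0 b 0 0)"
proof -
  have "b*c = -(a*a)" using assms(2) by (simp add: eq_neg_iff_add_eq_0 add.commute)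
  then have c: "c = -(a*a)/b" using assms(1) by (simp add: field_simps)
  have "M2 a b c (-a) = Ad (M2 1 0 (-a/b) 1) (M2 0 b 0 0)"
    using assms(1) unfolding c by (simp add: Ad_M2 M2_mult)
  then show ?thesis using orbit_Ad[of "M2 1 0 (-a/b) 1"] by (simp add: SL2_M2)
qed

lemma nil_c: assumes "c \<noteq> 0" "a*a + b*c = 0"
  shows "orbit (M2 a b c (-a)) = orbit (M2 0 0 c 0)"
proof -
  have "b*c = -(a*a)" using assms(2) by (simp add: eq_neg_iff_add_eq_0 add.commute)
  then have b: "b = -(a*a)/c" using assms(1) by (simp add: field_simps)
  have "M2 a b c (-a) = Ad (M2 1 (a/c) 0 1) (M2 0 0 c 0)"
    using assms(1) unfolding b by (simp add: Ad_M2 M2_mult)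
  then show ?thesis using orbit_Ad[of "M2 1 (a/c) 0 1"] by (simp add: SL2_M2)
qed

lemma scale_b: assumes "w \<noteq> 0" shows "orbit (M2 0 (b*(w*w)) 0 0) = orbit (M2 0 b 0 0)"
proof -
  have "M2 0 (b*(w*w)) 0 0 = Ad (M2 w 0 0 (1/w)) (M2 0 b 0 0)"
    using assms by (simp add: Ad_M2 M2_mult mult_ac)
  then show ?thesis using orbit_Ad[of "M2 w 0 0 (1/w)"] assms by (simp add: SL2_M2)
qed

lemma scale_c: assumes "w \<noteq> 0" shows "orbit (M2 0 0 (c*(w*w)) 0) = orbit (M2 0 0 c 0)"
proof -
  have "M2 0 0 (c*(w*w)) 0 = Ad (M2 (1/w) 0 0 w) (M2 0 0 c 0)"
    using assms by (simp add: Ad_M2 M2_mult mult_ac)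
  then show ?thesis using orbit_Ad[of "M2 (1/w) 0 0 w"] assms by (simp add: SL2_M2)
qed

context valF
begin

lemma sq_close: assumes "b \<noteq> 0" "vgt v (b1 - b) (real_of_int (v b))"
  shows "\<exists>w. w \<noteq> 0 \<and> b1 = b * (w * w)"
proof -
  have "vge v (b1 / b - 1) 1"
  proof (cases "b1 = b")
    case False
    have "b1 / b - 1 = (b1 - b) / b" using assms(1) by (simp add: field_simps)
    moreover have "v (b1 - b) > v b" using assms(2) False by (simp add: vgt_def)
    ultimately show ?thesis using assms(1) False by (simp add: vge_def vdiv)
  qed (simp add: assms(1))
  from hensel[OF this] obtain w where "w \<noteq> 0" "w * w = b1 / b" by blast
  then show ?thesis using assms(1) by (intro exI[of _ w]) simp
qed

lemma nil_class:
  assumes t: "tight v s (M2 a b c (-a)) d" and nil: "a1*a1 + b1*c1 = 0"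
    and e: "vgt v (a1 - a) d" "vgt v (b1 - b) (d - s)" "vgt v (c1 - c) (d + s)"
  shows "(b \<noteq> 0 \<and> real_of_int (v b) + s = d \<and> orbit (M2 a1 b1 c1 (-a1)) = orbit (M2 0 b 0 0)) \<or>
         (\<not> (b \<noteq> 0 \<and> real_of_int (v b) + s = d) \<and> c \<noteq> 0 \<and> real_of_int (v c) - s = d \<and>
            orbit (M2 a1 b1 c1 (-a1)) = orbit (M2 0 0 c 0))"
proof (cases "b \<noteq> 0 \<and> real_of_int (v b) + s = d")
  case True
  then have "d - s = real_of_int (v b)" by linarith
  then have "vgt v (b1 - b) (real_of_int (v b))" using e(2) by simp
  then obtain w where w: "w \<noteq> 0" "b1 = b * (w * w)" using sq_close True by blast
  then have "b1 \<noteq> 0" using True by simp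
  then have "orbit (M2 a1 b1 c1 (-a1)) = orbit (M2 0 b1 0 0)" using nil_b nil by blast
  also have "\<dots> = orbit (M2 0 b 0 0)" using scale_b[OF w(1)] w(2) by simp
  finally show ?thesis using True by blast
next
  case nb: False
  show ?thesis
  proof (cases "c \<noteq> 0 \<and> real_of_int (v c) - s = d")
    case True
    then have "d + s = real_of_int (v c)" by linarith
    then have "vgt v (c1 - c) (real_of_int (v c))" using e(3) by simp
    then obtain w where w: "w \<noteq> 0" "c1 = c * (w * w)" using sq_close True by blast
    then have "c1 \<noteq> 0" using True by simp
    then have "orbit (M2 a1 b1 c1 (-a1)) = orbit (M2 0 0 c1 0)" using nil_c nil by blast
    also have "\<dots> = orbit (M2 0 0 c 0)" using scale_c[OF w(1)] w(2) by simp
    finally show ?thesis using True nb by blast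
  next
    case False
    have A: "a \<noteq> 0 \<and> real_of_int (v a) = d \<and> vgt v b (d - s) \<and> vgt v c (d + s)"
      using aonly[OF t nb False] .
    have "a1 - a = 0 \<or> v a < v (a1 - a)" using e(1) A by (auto simp: vgt_def)
    from strict_ultra[of a, OF _ this] A have a1: "a1 \<noteq> 0" "real_of_int (v a1) = d" by simp_all
    have b1: "vgt v b1 (d - s)" using vgt_add[OF conjunct1[OF conjunct2[OF conjunct2[OF A]]] e(2)] by simp
    have c1: "vgt v c1 (d + s)" using vgt_add[OF conjunct2[OF conjunct2[OF conjunct2[OF A]]] e(3)] by simp
    from aonly_nonnil[OF a1 b1 c1] nil show ?thesis by simp
  qed
qed

end

lemma coset_iff: "N \<in> coset X L \<longleftrightarrow> N - X \<in> L"
proof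
  assume "N \<in> coset X L" then show "N - X \<in> L" by (auto simp: coset_def)
next
  assume "N - X \<in> L"
  moreover have "N = X + (N - X)" by simp
  ultimately show "N \<in> coset X L" unfolding coset_def by blast
qed

lemma det_pow: "det ((((**) X) ^^ n) (mat 1)) = det (X::'a::field mat2) ^ n"
  by (induction n) (simp_all add: det_mul det_I)

lemma nilpotent_iff: assumes "X \<in> sl2" shows "nilpotent_mat X \<longleftrightarrow> det X = 0"
proof
  assume "nilpotent_mat X"
  then obtain n where n: "(((**) X) ^^ n) (mat 1) = 0" by (auto simp: nilpotent_mat_def)
  have d0: "det (0::'a mat2) = 0" by (simp add: M2_zero M2_det)
  have "n \<noteq> 0"
  proof
    assume "n = 0"
    with n have "(mat 1::'a mat2) = 0" by simp
    then show False by (simp add: M2_one M2_zero M2_eq_iff)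
  qed
  moreover have "det X ^ n = 0" using det_pow[where X=X and n=n] n d0 by simp
  ultimately show "det X = 0" by simp
next
  assume d: "det X = 0"
  have X: "X = M2 (X$1$1) (X$1$2) (X$2$1) (- X$1$1)" using assms by (rule sl2_M2)
  have "det (M2 (X$1$1) (X$1$2) (X$2$1) (- X$1$1)) = 0" using d X by simp
  then have q: "X$1$1*X$1$1 + X$1$2*X$2$1 = 0" unfolding M2_det by algebra
  have "X ** X = 0"
    using q by (subst (1 2) X) (simp add: M2_mult M2_zero algebra_simps)
  then have "(((**) X) ^^ 2) (mat 1) = 0" by (simp add: numeral_2_eq_2 matrix_mul_rid)
  then show "nilpotent_mat X" unfolding nilpotent_mat_def by blast
qed

context valF
begin

lemma MP_plus_eq: "h \<in> SL2 \<Longrightarrow> MP_plus v (h, s) t = Ad h ` MPp_std v s t"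
  unfolding MP_plus_def MP_def MPp_union[symmetric] by (simp add: image_UN)

lemma MPd_eq: assumes h: "h \<in> SL2" shows "MPd v (h, s) r = Ad h ` MP_std v s r"
proof -
  have tr: "trace (X ** Ad h Y) = trace (Ad (matrix_inv h) X ** Y)" for X Y
    using trace_Ad2[OF SL2_inv[OF h], of X "Ad h Y"] Ad_inv_Ad[OF h] by simp
  have "X \<in> MPd v (h, s) r \<longleftrightarrow> Ad (matrix_inv h) X \<in> MP_std v s r" for X
  proof -
    have "X \<in> MPd v (h, s) r \<longleftrightarrow> X \<in> sl2 \<and> (\<forall>Y \<in> MPp_std v s (- r). vge v (trace (X ** Ad h Y)) 1)"
      unfolding MPd_def MP_plus_eq[OF h] by blast
    also have "\<dots> \<longleftrightarrow> Ad (matrix_inv h) X \<in> {X \<in> sl2. \<forall>Y \<in> MPp_std v s (- r). vge v (trace (X ** Y)) 1}"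
      by (simp add: tr sl2_Ad[OF SL2_inv[OF h]])
    finally show ?thesis by (simp only: dual_std)
  qed
  then show ?thesis using Ad_image_iff[OF h] by blast
qed

lemma MPd_plus_eq: assumes h: "h \<in> SL2" shows "MPd_plus v (h, s) r = Ad h ` MPp_std v s r"
  unfolding MPd_plus_def MPd_eq[OF h] MPp_union[symmetric] by (simp add: image_UN)

lemma MPdE_iff: assumes h: "h \<in> SL2"
  shows "X \<in> MPdE v (h, s) r \<longleftrightarrow> (\<forall>t. ereal t \<le> r \<longrightarrow> Ad (matrix_inv h) X \<in> MP_std v s t)"
  unfolding MPdE_def MPd_eq[OF h] Ad_image_iff[OF h] by simp

lemma depth_at_eq: assumes h: "h \<in> SL2"
  shows "depth_at v (h, s) X = (THE t. tight v s (Ad (matrix_inv h) X) t)"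
  unfolding depth_at_def MPd_eq[OF h] MPd_plus_eq[OF h] Ad_image_iff[OF h] tight_def ..

lemma depth_tight: assumes h: "h \<in> SL2" and X: "X \<in> sl2" "X \<noteq> 0"
  shows "tight v s (Ad (matrix_inv h) X) (depth_at v (h, s) X)"
proof -
  have "Ad (matrix_inv h) X \<in> sl2" using X h by (simp add: sl2_Ad SL2_inv)
  moreover have "Ad (matrix_inv h) X \<noteq> 0" using X Ad_Ad_inv[OF h, of X] by (metis Ad_zero)
  ultimately obtain t where t: "tight v s (Ad (matrix_inv h) X) t" using tight_exists by blast
  show ?thesis unfolding depth_at_eq[OF h] by (rule theI[where a=t]) (use t tight_unique in blast)+
qed

lemma depth_eqI: assumes h: "h \<in> SL2" and t: "tight v s (Ad (matrix_inv h) X) t"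
  shows "depth_at v (h, s) X = t"
  unfolding depth_at_eq[OF h] by (rule the_equality) (use t tight_unique in blast)+

definition rep :: "real \<Rightarrow> 'a mat2 \<Rightarrow> real \<Rightarrow> 'a mat2 set" where
  "rep s Y d = (if Y$1$2 \<noteq> 0 \<and> real_of_int (v (Y$1$2)) + s = d then orbit (M2 0 (Y$1$2) 0 0)
                else orbit (M2 0 0 (Y$2$1) 0))"

lemma orbit_std: assumes t: "tight v s Y d" and Y: "Y \<in> sl2" and N: "N \<in> sl2" "det N = 0"
  and e: "N - Y \<in> MPp_std v s d"
  shows "orbit N = rep s Y d"
proof -
  define a b c where "a = Y$1$1" "b = Y$1$2" "c = Y$2$1"
  define a1 b1 c1 where "a1 = N$1$1" "b1 = N$1$2" "c1 = N$2$1"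
  have YE: "Y = M2 a b c (-a)" using Y by (simp add: sl2_M2 a_b_c_def)
  have NE: "N = M2 a1 b1 c1 (-a1)" using N by (simp add: sl2_M2 a1_b1_c1_def)
  have nil: "a1*a1 + b1*c1 = 0" using N(2) unfolding NE M2_det by (simp add: algebra_simps)
    (metis add.inverse_unique add_eq_0_iff)
  have ee: "vgt v (a1 - a) d" "vgt v (b1 - b) (d - s)" "vgt v (c1 - c) (d + s)"
    using e by (simp_all add: MPp_std_def a_b_c_def a1_b1_c1_def)
  from nil_class[OF t[unfolded YE] nil ee] show ?thesis
    unfolding rep_def NE by (auto simp: a_b_c_def)
qed

lemma transp: assumes "g \<in> SL2" "k \<in> SL2"
  shows "Ad (matrix_inv (g ** k)) (Ad g Z) = Ad (matrix_inv k) Z"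
  using assms by (simp add: inv_mult_SL2 Ad_Ad[symmetric] SL2_inv Ad_inv_Ad)

lemma minorb_char:
  assumes h: "h \<in> SL2" and X: "X \<in> sl2" "X \<noteq> 0" and N: "N \<in> sl2" "det N = 0"
    and e: "Ad (matrix_inv h) (N - X) \<in> MPp_std v s (depth_at v (h, s) X)"
  shows "minorb v X (h, s) = orbit N"
proof -
  define d where "d = depth_at v (h, s) X"
  define Y where "Y = Ad (matrix_inv h) X"
  have t: "tight v s Y d" unfolding Y_def d_def by (rule depth_tight[OF h X])
  have Ysl: "Y \<in> sl2" using X h by (simp add: Y_def sl2_Ad SL2_inv)
  have std: "orbit M = rep s Y d" if M: "M \<in> sl2" "det M = 0" "Ad (matrix_inv h) (M - X) \<in> MPp_std v s d" for M
  proof -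
    have "orbit M = orbit (Ad (matrix_inv h) M)" using orbit_Ad[OF SL2_inv[OF h]] by simp
    also have "\<dots> = rep s Y d"
      using M h by (intro orbit_std[OF t Ysl]) (simp_all add: sl2_Ad SL2_inv det_Ad Y_def Ad_diff[symmetric])
    finally show ?thesis .
  qed
  have oN: "orbit N = rep s Y d" using std N e by (simp add: d_def)
  have uniq: "Ob = orbit N" if "meets_deg v X (h, s) Ob" for Ob
  proof -
    from that obtain N0 M where N0: "N0 \<in> sl2" "nilpotent_mat N0" "Ob = orbit N0"
      and M: "M \<in> Ob" "M \<in> coset X (MPd_plus v (h, s) d)"
      by (auto simp: meets_deg_def nil_orbit_def d_def)
    from M(1) N0(3) obtain g where g: "g \<in> SL2" "M = Ad g N0" by (auto simp: orbit_def)
    have "M \<in> sl2" "det M = 0" using g N0 nilpotent_iff[OF N0(1)] by (simp_all add: sl2_Ad det_Ad)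
    moreover have "Ad (matrix_inv h) (M - X) \<in> MPp_std v s d"
      using M(2) by (simp add: coset_iff MPd_plus_eq[OF h] Ad_image_iff[OF h])
    ultimately have "orbit M = orbit N" using std oN by simp
    moreover have "orbit M = Ob" using g N0 orbit_Ad by simp
    ultimately show ?thesis by simp
  qed
  have md: "meets_deg v X (h, s) (orbit N)"
  proof -
    have "nil_orbit (orbit N)" using N nilpotent_iff[OF N(1)] by (auto simp: nil_orbit_def)
    moreover have "N \<in> coset X (MPd_plus v (h, s) (depth_at v (h, s) X))"
      using e by (simp add: coset_iff MPd_plus_eq[OF h] Ad_image_iff[OF h])
    ultimately show ?thesis using orbit_self[of N] by (auto simp: meets_deg_def)
  qed
  show ?thesis unfolding minorb_def
    by (rule the_equality) (use md uniq in blast)+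
qed

end

lemma orbit_closed: assumes g: "g \<in> SL2" shows "Ad g Z \<in> orbit N0 \<longleftrightarrow> Z \<in> orbit N0"
proof
  assume "Z \<in> orbit N0"
  then obtain k where k: "k \<in> SL2" "Z = Ad k N0" by (auto simp: orbit_def)
  then have "Ad g Z = Ad (g ** k) N0" "g ** k \<in> SL2" using g by (simp_all add: Ad_Ad SL2_mult)
  then show "Ad g Z \<in> orbit N0" unfolding orbit_def by blast
next
  assume "Ad g Z \<in> orbit N0"
  then obtain k where k: "k \<in> SL2" "Ad g Z = Ad k N0" by (auto simp: orbit_def)
  then have "Z = Ad (matrix_inv g ** k) N0" "matrix_inv g ** k \<in> SL2"
    using g Ad_inv_Ad[OF g, of Z] by (simp_all add: Ad_Ad[symmetric] SL2_mult SL2_inv)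
  then show "Z \<in> orbit N0" unfolding orbit_def by blast
qed

context valF
begin

lemma depth_transport: assumes "g \<in> SL2" "k \<in> SL2"
  shows "depth_at v (g ** k, s) (Ad g X) = depth_at v (k, s) X"
  using assms by (simp add: depth_at_eq SL2_mult transp)

lemma minorb_transport: assumes g: "g \<in> SL2" and k: "k \<in> SL2"
  shows "minorb v (Ad g X) (g ** k, s) = minorb v X (k, s)"
proof -
  have gk: "g ** k \<in> SL2" using g k by (rule SL2_mult)
  have P: "MPd_plus v (g ** k, s) t = Ad g ` MPd_plus v (k, s) t" for t
    using g k gk by (simp add: MPd_plus_eq image_image Ad_Ad)
  have C: "coset (Ad g X) (Ad g ` L) = Ad g ` coset X L" for L
    by (simp add: coset_def image_image Ad_add)
  have eq: "meets_deg v (Ad g X) (g ** k, s) Ob = meets_deg v X (k, s) Ob" for Ob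
  proof -
    have I: "Ob \<inter> Ad g ` S \<noteq> {} \<longleftrightarrow> Ob \<inter> S \<noteq> {}" if "nil_orbit Ob" for S
    proof -
      from that obtain N0 where "Ob = orbit N0" by (auto simp: nil_orbit_def)
      then show ?thesis using orbit_closed[OF g] by blast
    qed
    show ?thesis unfolding meets_deg_def depth_transport[OF g k] P C using I by blast
  qed
  show ?thesis by (simp only: minorb_def eq)
qed

definition tm :: "int \<Rightarrow> 'a mat2" where
  "tm m = M2 (upi powi m) 0 0 (inverse (upi powi m))"

lemma tm_SL2: "tm m \<in> SL2"
  using vpowi[of m] by (simp add: tm_def SL2_M2)

lemma std_shift: "Ad (matrix_inv (tm m)) W \<in> MP_std v s t \<longleftrightarrow> W \<in> MP_std v (s - 2 * real_of_int m) t"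
proof (cases "W \<in> sl2")
  case False
  then show ?thesis using sl2_Ad[OF SL2_inv[OF tm_SL2]] by (auto simp: MP_std_def)
next
  case True
  define P where "P = upi powi m"
  have P: "P \<noteq> 0" "v P = m" using vpowi[of m] by (simp_all add: P_def)
  define a b c where "a = W$1$1" "b = W$1$2" "c = W$2$1"
  have W: "W = M2 a b c (-a)" using True by (simp add: sl2_M2 a_b_c_def)
  have inv: "matrix_inv (tm m) = M2 (inverse P) 0 0 P"
    unfolding tm_def P_def[symmetric] using P by (subst inv_M2) simp_all
  have A: "Ad (matrix_inv (tm m)) W = M2 a (b * (inverse P * inverse P)) (c * (P * P)) (-a)"
    unfolding inv W using P by (simp add: Ad_M2 M2_mult field_simps)
  have vb: "vge v (b * (inverse P * inverse P)) (t - s) \<longleftrightarrow> vge v b (t - (s - 2 * real_of_int m))"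
    using P by (cases "b = 0") (simp_all add: vge_def vmult vinv algebra_simps)
  have vc: "vge v (c * (P * P)) (t + s) \<longleftrightarrow> vge v c (t + (s - 2 * real_of_int m))"
    using P by (cases "c = 0") (simp_all add: vge_def vmult algebra_simps)
  show ?thesis unfolding A by (subst W) (simp only: MP_std_M2 vb vc)
qed

lemma shift_MPd: assumes h: "h \<in> SL2"
  shows "MPd v (h ** tm m, s) = MPd v (h, s - 2 * real_of_int m)"
proof
  fix t
  have htm: "h ** tm m \<in> SL2" using h tm_SL2 by (rule SL2_mult)
  have "X \<in> MPd v (h ** tm m, s) t \<longleftrightarrow> X \<in> MPd v (h, s - 2 * real_of_int m) t" for X
  proof -
    have "Ad (matrix_inv (h ** tm m)) X = Ad (matrix_inv (tm m)) (Ad (matrix_inv h) X)"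
      using h tm_SL2 by (simp add: inv_mult_SL2 Ad_Ad SL2_inv)
    then show ?thesis unfolding MPd_eq[OF htm] MPd_eq[OF h] Ad_image_iff[OF htm] Ad_image_iff[OF h]
      by (simp add: std_shift)
  qed
  then show "MPd v (h ** tm m, s) t = MPd v (h, s - 2 * real_of_int m) t" by blast
qed

lemma samept: assumes "MPd v x = MPd v y"
  shows "depth_at v x X = depth_at v y X" "minorb v X x = minorb v X y" "MPd_plus v x = MPd_plus v y"
proof -
  show P: "MPd_plus v x = MPd_plus v y" unfolding MPd_plus_def[abs_def] assms ..
  show D: "depth_at v x X = depth_at v y X" unfolding depth_at_def assms P ..
  have "depth_at v x = depth_at v y" unfolding depth_at_def[abs_def] assms P ..
  then show "minorb v X x = minorb v X y" unfolding minorb_def meets_deg_def P by simp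
qed

lemma depth_bound: assumes G: "\<Gamma> \<in> sl2" "\<Gamma> \<noteq> 0" "det \<Gamma> \<noteq> 0"
  shows "depth v \<Gamma> \<le> ereal (real_of_int (v (det \<Gamma>)) / 2)"
  unfolding depth_def
proof (rule SUP_least)
  fix x :: "'a mat2 \<times> real" assume "x \<in> BT"
  then obtain h s where x: "x = (h, s)" "h \<in> SL2" by (auto simp: BT_def)
  define Y where "Y = Ad (matrix_inv h) \<Gamma>"
  define a b c where "a = Y$1$1" "b = Y$1$2" "c = Y$2$1"
  have Ysl: "Y \<in> sl2" using G x by (simp add: Y_def sl2_Ad SL2_inv)
  have YE: "Y = M2 a b c (-a)" using Ysl by (simp add: sl2_M2 a_b_c_def)
  have t: "tight v s (M2 a b c (-a)) (depth_at v x \<Gamma>)" using depth_tight[OF x(2) G(1,2)] x YE Y_def by simp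
  have dY: "det \<Gamma> = - (a*a + b*c)" using det_Ad[OF SL2_inv[OF x(2)], of \<Gamma>] YE
    by (simp add: Y_def[symmetric] M2_det algebra_simps)
  have "a*a + b*c \<noteq> 0"
  proof
    assume q: "a*a + b*c = 0"
    have "det \<Gamma> = - (a*a + b*c)" by (rule dY)
    also have "\<dots> = 0" using q by simp
    finally show False using G(3) by simp
  qed
  from tight_le_det[OF t this] have "2 * depth_at v x \<Gamma> \<le> real_of_int (v (- (a*a + b*c)))"
    by (simp only: vneg)
  then have "2 * depth_at v x \<Gamma> \<le> real_of_int (v (det \<Gamma>))" by (simp only: dY)
  then show "ereal (depth_at v x \<Gamma>) \<le> ereal (real_of_int (v (det \<Gamma>)) / 2)" by simp
qed

end

context valF
begin

lemma point_analysis: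
  assumes G: "\<Gamma> \<in> sl2" "\<Gamma> \<noteq> 0" and h: "h \<in> SL2"
    and lt: "ereal (depth_at v (h, s) \<Gamma>) < depth v \<Gamma>"
  shows "\<exists>N. minorb v \<Gamma> (h, s) = orbit N \<and> N \<in> coset \<Gamma> (MPdE v (h, s) (depth v \<Gamma>)) \<and>
     (\<forall>s0. \<exists>k\<in>SL2. ereal (depth_at v (k, s0) \<Gamma>) < depth v \<Gamma> \<and> minorb v \<Gamma> (k, s0) = orbit N)"
proof -
  define d where "d = depth_at v (h, s) \<Gamma>"
  define Y where "Y = Ad (matrix_inv h) \<Gamma>"
  define a b c where "a = Y$1$1" "b = Y$1$2" "c = Y$2$1"
  define q where "q = a*a + b*c"
  have Ysl: "Y \<in> sl2" using G h by (simp add: Y_def sl2_Ad SL2_inv)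
  have YE: "Y = M2 a b c (-a)" using Ysl by (simp add: sl2_M2 a_b_c_def)
  have t: "tight v s (M2 a b c (-a)) d" using depth_tight[OF h G] YE by (simp add: Y_def d_def)
  have dY: "det \<Gamma> = - q" using det_Ad[OF SL2_inv[OF h], of \<Gamma>] YE
    by (simp add: Y_def[symmetric] M2_det q_def algebra_simps)
  have vq: "q \<noteq> 0 \<Longrightarrow> det \<Gamma> \<noteq> 0 \<and> v (det \<Gamma>) = v q" using dY by (simp add: vneg)
  have QT: "q = 0 \<or> 2 * t \<le> real_of_int (v q)" if "ereal t \<le> depth v \<Gamma>" for t
  proof (cases "q = 0")
    case False
    have "depth v \<Gamma> \<le> ereal (real_of_int (v q) / 2)" using depth_bound[OF G] vq[OF False] by simp
    then have "ereal t \<le> ereal (real_of_int (v q) / 2)" using that by (rule order.trans[rotated])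
    then show ?thesis by simp
  qed simp
  have Q: "q = 0 \<or> 2 * d < real_of_int (v q)"
  proof (cases "q = 0")
    case False
    have "depth v \<Gamma> \<le> ereal (real_of_int (v q) / 2)" using depth_bound[OF G] vq[OF False] by simp
    then have "ereal d < ereal (real_of_int (v q) / 2)" using lt d_def by (metis order.strict_trans2)
    then show ?thesis by simp
  qed simp
  have common: "Ad h N' \<in> sl2 \<and> det (Ad h N') = 0 \<and> Ad (matrix_inv h) (Ad h N' - \<Gamma>) = N' - M2 a b c (-a)"
    if "N' \<in> sl2" "det N' = 0" for N'
    using that h by (simp add: sl2_Ad det_Ad Ad_diff Ad_inv_Ad YE[symmetric] Y_def)
  from lead[OF t Q[unfolded q_def]] consider "b \<noteq> 0 \<and> real_of_int (v b) + s = d" | "c \<noteq> 0 \<and> real_of_int (v c) - s = d"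
    by blast
  then show ?thesis
  proof cases
    case 1
    note B = bcase[OF t Q[unfolded q_def] conjunct1[OF 1] conjunct2[OF 1]]
    define N' where "N' = M2 a b (-(a*a)/b) (-a)"
    have N': "N' \<in> sl2" "det N' = 0" using 1 by (simp_all add: N'_def sl2_iff M2_det)
    define N where "N = Ad h N'"
    have N: "N \<in> sl2" "det N = 0" "Ad (matrix_inv h) (N - \<Gamma>) = M2 0 0 (-(a*a + b*c)/b) 0"
      using common[OF N'] B(1) by (simp_all add: N_def N'_def)
    have m1: "minorb v \<Gamma> (h, s) = orbit N"
      using B(3)[of s] 1 by (intro minorb_char[OF h G N(1,2)]) (simp add: N(3) d_def)
    have m2: "N \<in> coset \<Gamma> (MPdE v (h, s) (depth v \<Gamma>))"
      unfolding coset_iff MPdE_iff[OF h] N(3) using B(2) QT by (simp add: q_def)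
    have m3: "\<exists>k\<in>SL2. ereal (depth_at v (k, s0) \<Gamma>) < depth v \<Gamma> \<and> minorb v \<Gamma> (k, s0) = orbit N" for s0
    proof -
      define m where "m = \<lceil>(s0 - s) / 2\<rceil> + 1"
      define s' where "s' = s0 - 2 * real_of_int m"
      define x where "x = (s0 - s) / 2"
      have x2: "s0 - s = 2 * x" by (simp add: x_def)
      have xc: "x \<le> real_of_int \<lceil>x\<rceil>" by (rule le_of_int_ceiling)
      have cc: "s0 - s \<le> 2 * real_of_int \<lceil>(s0 - s) / 2\<rceil>" using x2 xc unfolding x_def[symmetric] by linarith
      have s': "s' < s" unfolding s'_def m_def of_int_add of_int_1 using cc by (simp add: algebra_simps)
      have k: "h ** tm m \<in> SL2" using h tm_SL2 by (rule SL2_mult)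
      note sp = samept[OF shift_MPd[OF h, of m s0]]
      have B3: "tight v s' Y (real_of_int (v b) + s') \<and> M2 0 0 (-(a*a + b*c)/b) 0 \<in> MPp_std v s' (real_of_int (v b) + s')"
        using B(3)[of s'] s' YE by simp
      have D: "depth_at v (h, s') \<Gamma> = real_of_int (v b) + s'"
        using B3 by (intro depth_eqI[OF h]) (simp add: Y_def)
      have "ereal (depth_at v (h ** tm m, s0) \<Gamma>) < depth v \<Gamma>"
        using lt s' 1 by (simp add: sp(1) D s'_def[symmetric] d_def) (smt (verit) ereal_less(2) less_ereal.simps(1) order.strict_trans)
      moreover have "minorb v \<Gamma> (h ** tm m, s0) = orbit N"
        unfolding sp(2) s'_def[symmetric]
        using B3 by (intro minorb_char[OF h G N(1,2)]) (simp add: N(3) D)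
      ultimately show ?thesis using k by blast
    qed
    show ?thesis using m1 m2 m3 by blast
  next
    case 2
    note B = ccase[OF t Q[unfolded q_def] conjunct1[OF 2] conjunct2[OF 2]]
    define N' where "N' = M2 a (-(a*a)/c) c (-a)"
    have N': "N' \<in> sl2" "det N' = 0" using 2 by (simp_all add: N'_def sl2_iff M2_det)
    define N where "N = Ad h N'"
    have N: "N \<in> sl2" "det N = 0" "Ad (matrix_inv h) (N - \<Gamma>) = M2 0 (-(a*a + b*c)/c) 0 0"
      using common[OF N'] B(1) by (simp_all add: N_def N'_def)
    have m1: "minorb v \<Gamma> (h, s) = orbit N"
      using B(3)[of s] 2 by (intro minorb_char[OF h G N(1,2)]) (simp add: N(3) d_def)
    have m2: "N \<in> coset \<Gamma> (MPdE v (h, s) (depth v \<Gamma>))"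
      unfolding coset_iff MPdE_iff[OF h] N(3) using B(2) QT by (simp add: q_def)
    have m3: "\<exists>k\<in>SL2. ereal (depth_at v (k, s0) \<Gamma>) < depth v \<Gamma> \<and> minorb v \<Gamma> (k, s0) = orbit N" for s0
    proof -
      define m where "m = \<lfloor>(s0 - s) / 2\<rfloor> - 1"
      define s' where "s' = s0 - 2 * real_of_int m"
      define x where "x = (s0 - s) / 2"
      have x2: "s0 - s = 2 * x" by (simp add: x_def)
      have xc: "real_of_int \<lfloor>x\<rfloor> \<le> x" by (rule of_int_floor_le)
      have cc: "2 * real_of_int \<lfloor>(s0 - s) / 2\<rfloor> \<le> s0 - s" using x2 xc unfolding x_def[symmetric] by linarith
      have s': "s < s'" unfolding s'_def m_def of_int_diff of_int_1 using cc by (simp add: algebra_simps)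
      have k: "h ** tm m \<in> SL2" using h tm_SL2 by (rule SL2_mult)
      note sp = samept[OF shift_MPd[OF h, of m s0]]
      have B3: "tight v s' Y (real_of_int (v c) - s') \<and> M2 0 (-(a*a + b*c)/c) 0 0 \<in> MPp_std v s' (real_of_int (v c) - s')"
        using B(3)[of s'] s' YE by simp
      have D: "depth_at v (h, s') \<Gamma> = real_of_int (v c) - s'"
        using B3 by (intro depth_eqI[OF h]) (simp add: Y_def)
      have "ereal (depth_at v (h ** tm m, s0) \<Gamma>) < depth v \<Gamma>"
        using lt s' 2 by (simp add: sp(1) D s'_def[symmetric] d_def) (smt (verit) ereal_less(2) less_ereal.simps(1) order.strict_trans)
      moreover have "minorb v \<Gamma> (h ** tm m, s0) = orbit N"
        unfolding sp(2) s'_def[symmetric]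
        using B3 by (intro minorb_char[OF h G N(1,2)]) (simp add: N(3) D)
      ultimately show ?thesis using k by blast
    qed
    show ?thesis using m1 m2 m3 by blast
  qed
qed

end

lemma derive_two:
  fixes v :: "'a::field \<Rightarrow> int"
  assumes F: "nonarch_local_field v p" and p3: "p \<ge> 3"
  shows "(2::'a) \<noteq> 0 \<and> v 2 = 0"
proof -
  have mult: "\<And>x y. x \<noteq> 0 \<Longrightarrow> y \<noteq> 0 \<Longrightarrow> v (x * y) = v x + v y"
    and ultra: "\<And>x y. x \<noteq> 0 \<Longrightarrow> y \<noteq> 0 \<Longrightarrow> x + y \<noteq> 0 \<Longrightarrow> min (v x) (v y) \<le> v (x + y)"
    and pr: "prime p" and vp: "vge v (of_nat p) 1"
    using F by (auto simp: nonarch_local_field_def)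
  have v1: "v 1 = 0" using mult[of 1 1] by simp
  have add: "vge v a t \<Longrightarrow> vge v b t \<Longrightarrow> vge v (a + b) t" for a b t
    unfolding vge_def
  proof (elim disjE)
    assume "t \<le> real_of_int (v a)" "t \<le> real_of_int (v b)"
    then show "a + b = 0 \<or> t \<le> real_of_int (v (a + b))"
      using ultra[of a b] by (cases "a = 0"; cases "b = 0"; cases "a + b = 0") force+
  qed auto
  have vmul: "vge v a t \<Longrightarrow> vge v b u \<Longrightarrow> vge v (a * b) (t + u)" for a b t u
    by (cases "a = 0"; cases "b = 0") (auto simp: vge_def mult)
  have vneg: "vge v (- a) t" if "vge v a t" for a t
  proof -
    have "vge v (-1) 0"
    proof (cases "(-1::'a) = 0")
      case False
      have "v ((-1) * (-1::'a)) = v (-1) + v (-1)" using mult False by blast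
      then show ?thesis using v1 by (simp add: vge_def)
    qed (simp add: vge_def)
    from vmul[OF this that] show ?thesis by simp
  qed
  have nat0: "vge v (of_nat n :: 'a) 0" for n
  proof (induction n)
    case (Suc n)
    have "vge v (1::'a) 0" by (simp add: vge_def v1)
    from add[OF this Suc] show ?case by (simp add: add.commute)
  qed (simp add: vge_def)
  have "odd p" using pr p3 by (intro prime_odd_nat) auto
  then obtain k where k: "p = 2 * k + 1" by (metis oddE)
  have n2: "\<not> vge v (2::'a) 1"
  proof
    assume h2: "vge v (2::'a) 1"
    have "vge v (2 * (of_nat k :: 'a)) (1 + 0)" by (rule vmul[OF h2 nat0])
    then have "vge v (- (2 * (of_nat k :: 'a))) 1" using vneg by simp
    from add[OF vp this] have "vge v (of_nat p - 2 * (of_nat k :: 'a)) 1" by simp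
    moreover have "(of_nat p :: 'a) - 2 * of_nat k = 1" by (simp add: k)
    ultimately have "vge v (1::'a) 1" by simp
    then show False by (simp add: vge_def v1)
  qed
  have "vge v (of_nat 2 :: 'a) 0" by (rule nat0)
  then show ?thesis using n2 by (auto simp: vge_def)
qed

theorem mainTheorem3:
  fixes v :: "'a::field \<Rightarrow> int" and p :: nat and \<Gamma> :: "'a mat2"
  assumes F: "nonarch_local_field v p" and p3: "p \<ge> 3"
    and \<Gamma>: "\<Gamma> \<in> sl2" "\<Gamma> \<noteq> 0"
  defines "r \<equiv> depth v \<Gamma>"
  shows "(\<forall>Ob \<in> Nil_supp v \<Gamma>. \<exists>x\<in>BT. ereal (depth_at v x \<Gamma>) < r \<and>
                           Ob \<inter> coset \<Gamma> (MPdE v x r) \<noteq> {})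
       \<and> (\<forall>x\<in>BT. ereal (depth_at v x \<Gamma>) < r \<longrightarrow>
            (\<forall>Ob. nil_orbit Ob \<and> Ob \<inter> coset \<Gamma> (MPdE v x r) \<noteq> {} \<longrightarrow> Ob \<in> Nil_supp v \<Gamma>))
       \<and> (\<forall>x\<in>BT. Nil_supp v \<Gamma> = {minorb v (Ad g \<Gamma>) x | g. g \<in> SL2 \<and>
                                  ereal (depth_at v x (Ad g \<Gamma>)) < depth v \<Gamma>}
                  \<and> Nil_supp v \<Gamma> = Nil_at v \<Gamma> x)"
proof -
  have two: "(2::'a) \<noteq> 0 \<and> v 2 = 0" by (rule derive_two[OF F p3])
  interpret valF v
  proof
    show "\<And>x y. x \<noteq> 0 \<Longrightarrow> y \<noteq> 0 \<Longrightarrow> v (x * y) = v x + v y"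
      "\<And>x y. x \<noteq> 0 \<Longrightarrow> y \<noteq> 0 \<Longrightarrow> x + y \<noteq> 0 \<Longrightarrow> min (v x) (v y) \<le> v (x + y)"
      "\<exists>\<pi>. \<pi> \<noteq> 0 \<and> v \<pi> = 1"
      using F by (auto simp: nonarch_local_field_def)
    show "\<And>f :: nat \<Rightarrow> 'a.
        (\<forall>n::int. \<exists>N. \<forall>m\<ge>N. \<forall>k\<ge>N. vge v (f m - f k) (real_of_int n)) \<Longrightarrow>
        (\<exists>L. \<forall>n::int. \<exists>N. \<forall>m\<ge>N. vge v (f m - L) (real_of_int n))"
      using F unfolding nonarch_local_field_def by blast
    show "(2::'a) \<noteq> 0" "v 2 = 0" using two by simp_all
  qed
  have PA: "\<exists>N. minorb v \<Gamma> (h, s) = orbit N \<and> N \<in> coset \<Gamma> (MPdE v (h, s) r) \<and>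
     (\<forall>s0. \<exists>k\<in>SL2. ereal (depth_at v (k, s0) \<Gamma>) < r \<and> minorb v \<Gamma> (k, s0) = orbit N)"
    if "(h, s) \<in> BT" "ereal (depth_at v (h, s) \<Gamma>) < r" for h s
    using point_analysis[OF \<Gamma>, of h s] that unfolding r_def by (simp add: BT_def)
  have A: "\<forall>Ob \<in> Nil_supp v \<Gamma>. \<exists>x\<in>BT. ereal (depth_at v x \<Gamma>) < r \<and> Ob \<inter> coset \<Gamma> (MPdE v x r) \<noteq> {}"
  proof
    fix Ob assume "Ob \<in> Nil_supp v \<Gamma>"
    then obtain h s where x: "(h, s) \<in> BT" "ereal (depth_at v (h, s) \<Gamma>) < r" "Ob = minorb v \<Gamma> (h, s)"
      unfolding Nil_supp_def r_def by auto
    from PA[OF x(1,2)] obtain N where "minorb v \<Gamma> (h, s) = orbit N" "N \<in> coset \<Gamma> (MPdE v (h, s) r)" by blast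
    then have "N \<in> Ob \<inter> coset \<Gamma> (MPdE v (h, s) r)" using x(3) orbit_self by auto
    then show "\<exists>x\<in>BT. ereal (depth_at v x \<Gamma>) < r \<and> Ob \<inter> coset \<Gamma> (MPdE v x r) \<noteq> {}"
      using x by blast
  qed
  have B: "\<forall>x\<in>BT. ereal (depth_at v x \<Gamma>) < r \<longrightarrow>
            (\<forall>Ob. nil_orbit Ob \<and> Ob \<inter> coset \<Gamma> (MPdE v x r) \<noteq> {} \<longrightarrow> Ob \<in> Nil_supp v \<Gamma>)"
  proof (intro ballI impI allI)
    fix x Ob assume x: "x \<in> BT" "ereal (depth_at v x \<Gamma>) < r"
      and Ob: "nil_orbit Ob \<and> Ob \<inter> coset \<Gamma> (MPdE v x r) \<noteq> {}"
    obtain h s where hs: "x = (h, s)" "h \<in> SL2" using x(1) by (auto simp: BT_def)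
    define d where "d = depth_at v x \<Gamma>"
    from Ob obtain N0 M where N0: "N0 \<in> sl2" "nilpotent_mat N0" "Ob = orbit N0"
      and M: "M \<in> Ob" "M \<in> coset \<Gamma> (MPdE v x r)" by (auto simp: nil_orbit_def)
    from M(1) N0(3) obtain g where g: "g \<in> SL2" "M = Ad g N0" by (auto simp: orbit_def)
    have Msl: "M \<in> sl2" "det M = 0" using g N0 nilpotent_iff[OF N0(1)] by (simp_all add: sl2_Ad det_Ad)
    have oM: "orbit M = Ob" using g N0 orbit_Ad by simp
    obtain t where t: "ereal t \<le> r" "d < t"
    proof (cases r)
      case (real r')
      then show ?thesis using that[of r'] x(2) by (simp add: d_def)
    next
      case PInf
      then show ?thesis using that[of "d + 1"] by simp
    next
      case MInf
      then show ?thesis using x(2) by simp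
    qed
    have "Ad (matrix_inv h) (M - \<Gamma>) \<in> MP_std v s t"
      using M(2) t(1) unfolding coset_iff hs(1) MPdE_iff[OF hs(2)] by blast
    then have "Ad (matrix_inv h) (M - \<Gamma>) \<in> MPp_std v s d"
      using t(2) unfolding MPp_union[symmetric] by blast
    then have "minorb v \<Gamma> (h, s) = orbit M"
      by (intro minorb_char[OF hs(2) \<Gamma> Msl]) (simp add: d_def hs(1))
    then show "Ob \<in> Nil_supp v \<Gamma>"
      using x oM unfolding Nil_supp_def r_def hs(1) by auto
  qed
  have C: "Nil_supp v \<Gamma> = {minorb v (Ad g \<Gamma>) x | g. g \<in> SL2 \<and>
                                  ereal (depth_at v x (Ad g \<Gamma>)) < depth v \<Gamma>}" if x: "x \<in> BT" for x
  proof -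
    obtain hx s0 where hs: "x = (hx, s0)" "hx \<in> SL2" using x by (auto simp: BT_def)
    have gk: "(g ** (matrix_inv g ** hx)) = hx" if "g \<in> SL2" for g
      using SL2_inv_mult[OF that] by (simp add: matrix_mul_assoc matrix_mul_lid)
    have gk2: "(hx ** matrix_inv k) ** k = hx" if "k \<in> SL2" for k
      using SL2_inv_mult[OF that] by (simp add: matrix_mul_assoc[symmetric] matrix_mul_rid)
    show ?thesis
    proof
      show "Nil_supp v \<Gamma> \<subseteq> {minorb v (Ad g \<Gamma>) x | g. g \<in> SL2 \<and>
                                  ereal (depth_at v x (Ad g \<Gamma>)) < depth v \<Gamma>}"
      proof
        fix Ob assume "Ob \<in> Nil_supp v \<Gamma>"
        then obtain h s where y: "(h, s) \<in> BT" "ereal (depth_at v (h, s) \<Gamma>) < r" "Ob = minorb v \<Gamma> (h, s)"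
          unfolding Nil_supp_def r_def by auto
        from PA[OF y(1,2)] obtain N k where N: "minorb v \<Gamma> (h, s) = orbit N"
          and k: "k \<in> SL2" "ereal (depth_at v (k, s0) \<Gamma>) < r" "minorb v \<Gamma> (k, s0) = orbit N" by blast
        define g where "g = hx ** matrix_inv k"
        have g: "g \<in> SL2" using hs(2) k(1) by (simp add: g_def SL2_mult SL2_inv)
        have x': "x = (g ** k, s0)" using gk2[OF k(1)] hs(1) by (simp add: g_def)
        have "minorb v (Ad g \<Gamma>) x = Ob" unfolding x' minorb_transport[OF g k(1)] using k(3) N y(3) by simp
        moreover have "ereal (depth_at v x (Ad g \<Gamma>)) < depth v \<Gamma>"
          unfolding x' depth_transport[OF g k(1)] using k(2) by (simp add: r_def)
        ultimately show "Ob \<in> {minorb v (Ad g \<Gamma>) x | g. g \<in> SL2 \<and>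
                                  ereal (depth_at v x (Ad g \<Gamma>)) < depth v \<Gamma>}" using g by blast
      qed
      show "{minorb v (Ad g \<Gamma>) x | g. g \<in> SL2 \<and>
                                  ereal (depth_at v x (Ad g \<Gamma>)) < depth v \<Gamma>} \<subseteq> Nil_supp v \<Gamma>"
      proof
        fix Ob assume "Ob \<in> {minorb v (Ad g \<Gamma>) x | g. g \<in> SL2 \<and>
                                  ereal (depth_at v x (Ad g \<Gamma>)) < depth v \<Gamma>}"
        then obtain g where g: "g \<in> SL2" "Ob = minorb v (Ad g \<Gamma>) x" "ereal (depth_at v x (Ad g \<Gamma>)) < depth v \<Gamma>"
          by blast
        define k where "k = matrix_inv g ** hx"
        have k: "k \<in> SL2" using g(1) hs(2) by (simp add: k_def SL2_mult SL2_inv)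
        have x': "x = (g ** k, s0)" using gk[OF g(1)] hs(1) by (simp add: k_def)
        have "Ob = minorb v \<Gamma> (k, s0)" using g(2) unfolding x' minorb_transport[OF g(1) k] .
        moreover have "ereal (depth_at v (k, s0) \<Gamma>) < depth v \<Gamma>"
          using g(3) unfolding x' depth_transport[OF g(1) k] .
        moreover have "(k, s0) \<in> BT" using k by (simp add: BT_def)
        ultimately show "Ob \<in> Nil_supp v \<Gamma>" unfolding Nil_supp_def by blast
      qed
    qed
  qed
  show ?thesis using A B C by (simp add: Nil_at_def)
qed

end
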